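(* Let $(\mathcal B,\phi)$ be a noncommutative $*$-probability space, $t\ge0$, and $f_1,\dots,f_n\in\mathcal B^\circ$. (a) $R^{\Psi_t}[X(f_1),\dots,X(f_n)]=t\,B^\phi[f_1,\dots,f_n]$. Consequently \[ \mu^{\Psi_t}_{X(f_1), \ldots, X(f_n)} = \mathbb{B}_t(\mu_{f_1, \ldots, f_n})^{\uplus t} = \left( \mu^{\Phi_t}_{X(f_1), \ldots, X(f_n)} \right)^{\uplus \frac{t}{1+t}}. \] (b) The conditionally free cumulants with respect to the pair $(\Phi_t,\Psi_t)$ are $R^{(\Phi_t,\Psi_t)}[X(f_1),\dots,X(f_n)]=(1+t)B^\phi[f_1,\dots,f_n]$.
   Context: $\mathcal B$ is a unital $*$-algebra, $\phi$ a state, $\mathcal B^\circ=\ker\phi$. $\mathcal T(\mathcal B,\phi)=\mathbb C1\oplus\bigoplus_{n\ge1}(\mathcal B^\circ)^{\otimes n}$ with concatenation product and involution $(f_1\otimes\cdots\otimes f_n)^*=f_n^*\otimes\cdots\otimes f_1^*$; $f_1\otimes\cdots\otimes f_n$ is written $X(f_1)\cdots X(f_n)$. Let $\Lambda(f,g)=fg-\phi[fg]1$; for $f_1,\dots,f_n\in\mathcal B^\circ$ and $V=\{i(1)<\dots<i(k)\}$, $k\ge2$, $W(V)=f_{i(1)}f_{i(2)}$ if $k=2$, $W(V)=f_{i(1)}\Lambda(f_{i(2)},\Lambda(\ldots,\Lambda(f_{i(k-1)},f_{i(k)})\cdots))$ if $k\ge3$. $\mathrm{NC}_{ns}(n)$: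 noncrossing partitions of $\{1,\dots,n\}$ without singletons; a block $V$ is inner if some other block $U$ has $i<j<k$ with $j\in V$, $i,k\in U$, otherwise outer. $\Phi_t,\Psi_t$ are the linear functionals with value $1$ at $1$ and $\Phi_t[X(f_1)\cdots X(f_n)]=\sum_{\pi\in\mathrm{NC}_{ns}(n)}(1+t)^{|\mathrm{Outer}(\pi)|}t^{|\mathrm{Inner}(\pi)|}\prod_{V\in\pi}\phi[W(V)]$, $\Psi_t[X(f_1)\cdots X(f_n)]=\sum_{\pi\in\mathrm{NC}_{ns}(n)}t^{|\pi|}\prod_{V\in\pi}\phi[W(V)]$. Cumulants (arguments in each block in increasing order): free cumulants $R^\omega$ via $\omega[a_1\cdots a_n]=\sum_{\pi\in\mathrm{NC}(n)}\prod_{V\in\pi}R^\omega[a_i:i\in V]$; Boolean cumulants $B^\omega$ via the same formula summed over interval partitions; conditionally free cumulants $R^{(\omega,\psi)}$ via $\omega[a_1\cdots a_n]=\sum_{\pi\in\mathrm{NC}(n)}\prod_{V\in\mathrm{Inner}(\pi)}R^\psi[a_i:i\in V]\prod_{U\in\mathrm{Outer}(\pi)}R^{(\omega,\psi)}[a_i:i\in U]$. $\mu$ with indices denotes joint distribution (functional on noncommutative polynomials). $\mu^{\boxplus s}$ (resp. $\mu^{\uplus s}$) is the functional whose free (resp. Boolean) cumulants are $s$ times those of $\mu$; the Belinschi–Nica transformation is $\mathbb B_t(\mu)=(\mu^{\boxplus(1+t)})^{\uplus\frac1{1+t}}$. *)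

theory Defs
  imports Complex_Main "HOL-Library.Disjoint_Sets"
begin

definition star_prob_space ::
  "(complex \<Rightarrow> 'b::ring_1 \<Rightarrow> 'b) \<Rightarrow> ('b \<Rightarrow> 'b) \<Rightarrow> ('b \<Rightarrow> complex) \<Rightarrow> bool" where
  "star_prob_space smul star phi \<longleftrightarrow>
     module smul \<and>
     (\<forall>c x y. smul c (x * y) = smul c x * y \<and> smul c (x * y) = x * smul c y) \<and>
     (\<forall>x y. star (x + y) = star x + star y) \<and>
     (\<forall>c x. star (smul c x) = smul (cnj c) (star x)) \<and>
     (\<forall>x y. star (x * y) = star y * star x) \<and>
     (\<forall>x. star (star x) = x) \<and>
     (\<forall>x y. phi (x + y) = phi x + phi y) \<and>
     (\<forall>c x. phi (smul c x) = c * phi x) \<and>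
     phi 1 = 1 \<and>
     (\<forall>a. Im (phi (star a * a)) = 0 \<and> Re (phi (star a * a)) \<ge> 0)"

definition noncrossing :: "nat set set \<Rightarrow> bool" where
  "noncrossing P \<longleftrightarrow> (\<forall>V\<in>P. \<forall>U\<in>P. V \<noteq> U \<longrightarrow>
     \<not> (\<exists>a b c d. a < b \<and> b < c \<and> c < d \<and> a \<in> V \<and> c \<in> V \<and> b \<in> U \<and> d \<in> U))"

definition NC :: "nat \<Rightarrow> nat set set set" where
  "NC n = {P. partition_on {..<n} P \<and> noncrossing P}"

definition interval_partitions :: "nat \<Rightarrow> nat set set set" where
  "interval_partitions n = {P. partition_on {..<n} P \<and>
     (\<forall>V\<in>P. \<forall>i j k. i < j \<and> j < k \<and> i \<in> V \<and> k \<in> V \<longrightarrow> j \<in> V)}"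

definition NC_ns :: "nat \<Rightarrow> nat set set set" where
  "NC_ns n = {P \<in> NC n. \<forall>V\<in>P. card V \<ge> 2}"

definition inner_blocks :: "nat set set \<Rightarrow> nat set set" where
  "inner_blocks P = {V\<in>P. \<exists>U\<in>P. U \<noteq> V \<and>
     (\<exists>i j k. i < j \<and> j < k \<and> j \<in> V \<and> i \<in> U \<and> k \<in> U)}"

definition outer_blocks :: "nat set set \<Rightarrow> nat set set" where
  "outer_blocks P = P - inner_blocks P"

text \<open>A functional omega evaluated on products a_1...a_k of the variables is
represented by its moment function m with m [a_1,...,a_k] = omega[a_1 ... a_k].
The restriction of the argument list to a block V (indices in increasing order)
is nths as V.\<close>

definition free_cum :: "('a list \<Rightarrow> complex) \<Rightarrow> 'a list \<Rightarrow> complex" where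
  "free_cum m = (THE R. R [] = 0 \<and> (\<forall>as. as \<noteq> [] \<longrightarrow>
      m as = (\<Sum>P\<in>NC (length as). \<Prod>V\<in>P. R (nths as V))))"

definition bool_cum :: "('a list \<Rightarrow> complex) \<Rightarrow> 'a list \<Rightarrow> complex" where
  "bool_cum m = (THE R. R [] = 0 \<and> (\<forall>as. as \<noteq> [] \<longrightarrow>
      m as = (\<Sum>P\<in>interval_partitions (length as). \<Prod>V\<in>P. R (nths as V))))"

definition cfree_cum ::
  "('a list \<Rightarrow> complex) \<Rightarrow> ('a list \<Rightarrow> complex) \<Rightarrow> 'a list \<Rightarrow> complex" where
  "cfree_cum m mpsi = (THE R. R [] = 0 \<and> (\<forall>as. as \<noteq> [] \<longrightarrow>
      m as = (\<Sum>P\<in>NC (length as).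
                (\<Prod>V\<in>inner_blocks P. free_cum mpsi (nths as V)) *
                (\<Prod>U\<in>outer_blocks P. R (nths as U)))))"

text \<open>A joint distribution of n variables is a functional on noncommutative
polynomials in x_0,...,x_{n-1}; it is represented by its values on monomials,
i.e. by a function on words (lists of indices < n).\<close>

type_synonym distr = "nat list \<Rightarrow> complex"

definition free_pow :: "real \<Rightarrow> distr \<Rightarrow> distr" where
  "free_pow s mu = (\<lambda>w. \<Sum>P\<in>NC (length w). \<Prod>V\<in>P. of_real s * free_cum mu (nths w V))"

definition bool_pow :: "real \<Rightarrow> distr \<Rightarrow> distr" where
  "bool_pow s mu = (\<lambda>w. \<Sum>P\<in>interval_partitions (length w).
                         \<Prod>V\<in>P. of_real s * bool_cum mu (nths w V))"

definition BN_transform :: "real \<Rightarrow> distr \<Rightarrow> distr" where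
  "BN_transform t mu = bool_pow (1 / (1 + t)) (free_pow (1 + t) mu)"

definition joint_distr :: "('x list \<Rightarrow> complex) \<Rightarrow> 'x list \<Rightarrow> distr" where
  "joint_distr m xs = (\<lambda>w. m (map (\<lambda>i. xs ! i) w))"

definition Lam :: "(complex \<Rightarrow> 'b::ring_1 \<Rightarrow> 'b) \<Rightarrow> ('b \<Rightarrow> complex) \<Rightarrow> 'b \<Rightarrow> 'b \<Rightarrow> 'b" where
  "Lam smul phi f g = f * g - smul (phi (f * g)) 1"

fun lam_chain :: "(complex \<Rightarrow> 'b::ring_1 \<Rightarrow> 'b) \<Rightarrow> ('b \<Rightarrow> complex) \<Rightarrow> 'b list \<Rightarrow> 'b" where
  "lam_chain smul phi [a, b] = Lam smul phi a b"
| "lam_chain smul phi (a # b # c # rest) = Lam smul phi a (lam_chain smul phi (b # c # rest))"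
| "lam_chain smul phi _ = 1"

fun Wblock :: "(complex \<Rightarrow> 'b::ring_1 \<Rightarrow> 'b) \<Rightarrow> ('b \<Rightarrow> complex) \<Rightarrow> 'b list \<Rightarrow> 'b" where
  "Wblock smul phi [a, b] = a * b"
| "Wblock smul phi (a # b # c # rest) = a * lam_chain smul phi (b # c # rest)"
| "Wblock smul phi _ = 1"

text \<open>Values of Phi_t and Psi_t on the words X(f_1)...X(f_n); the functionals on
T(B,phi) are the linear extensions (value 1 at the empty word).\<close>

definition Phi_t :: "(complex \<Rightarrow> 'b::ring_1 \<Rightarrow> 'b) \<Rightarrow> ('b \<Rightarrow> complex) \<Rightarrow> real \<Rightarrow> 'b list \<Rightarrow> complex" where
  "Phi_t smul phi t fs = (if fs = [] then 1 else
     (\<Sum>P\<in>NC_ns (length fs). of_real (1 + t) ^ card (outer_blocks P) *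
        of_real t ^ card (inner_blocks P) * (\<Prod>V\<in>P. phi (Wblock smul phi (nths fs V)))))"

definition Psi_t :: "(complex \<Rightarrow> 'b::ring_1 \<Rightarrow> 'b) \<Rightarrow> ('b \<Rightarrow> complex) \<Rightarrow> real \<Rightarrow> 'b list \<Rightarrow> complex" where
  "Psi_t smul phi t fs = (if fs = [] then 1 else
     (\<Sum>P\<in>NC_ns (length fs). of_real t ^ card P * (\<Prod>V\<in>P. phi (Wblock smul phi (nths fs V)))))"

end

theory Submission
  imports Defs
begin


lemma partition_single_block:
  assumes "partition_on A P" "A \<in> P"
  shows "P = {A}"
proof -
  { fix W assume W: "W \<in> P"
    have "W \<subseteq> A" using assms(1) W by (auto simp: partition_on_def)
    moreover have "W \<noteq> {}" using assms(1) W by (auto simp: partition_on_def)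
    ultimately have "W = A"
      using assms W unfolding partition_on_def disjoint_def by blast }
  then show ?thesis using assms(2) by blast
qed

lemma block_shorter:
  assumes "partition_on {..<n} P" "P \<noteq> {{..<n}}" "V \<in> P"
  shows "card V < n" "V \<noteq> {}" "V \<subseteq> {..<n}"
proof -
  show sub: "V \<subseteq> {..<n}" using assms by (auto simp: partition_on_def)
  show "V \<noteq> {}" using assms by (auto simp: partition_on_def)
  have "V \<noteq> {..<n}" using partition_single_block[OF assms(1)] assms by auto
  then have "V \<subset> {..<n}" using sub by auto
  then show "card V < n" by (metis card_lessThan finite_lessThan psubset_card_mono)
qed

lemma length_nths_sub: "V \<subseteq> {..<length xs} \<Longrightarrow> length (nths xs V) = card V"
  by (simp add: length_nths) (metis (no_types, lifting) Collect_cong Collect_mem_eq lessThan_iff subset_eq)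

definition cumF where
  "cumF m Parts Wt R as = (if as = [] then 0 else
     m as - (\<Sum>P\<in>Parts (length as) - {{{..<length as}}}. Wt R as P))"

lemma cum_exists_unique:
  fixes m :: "'a list \<Rightarrow> complex"
  assumes fin: "\<And>n. finite (Parts n)"
    and one: "\<And>n. n > 0 \<Longrightarrow> {{..<n}} \<in> Parts n"
    and part: "\<And>n P. P \<in> Parts n \<Longrightarrow> partition_on {..<n} P"
    and W1: "\<And>R as. as \<noteq> [] \<Longrightarrow> Wt R as {{..<length as}} = R as"
    and loc: "\<And>R R' as P. P \<in> Parts (length as) \<Longrightarrow>
                 (\<And>V. V \<in> P \<Longrightarrow> R (nths as V) = R' (nths as V)) \<Longrightarrow> Wt R as P = Wt R' as P"
  shows "\<exists>!R. R [] = 0 \<and> (\<forall>as. as \<noteq> [] \<longrightarrow> m as = (\<Sum>P\<in>Parts (length as). Wt R as P))"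
proof -
  let ?F = "cumF m Parts Wt"
  have eqv: "m as = (\<Sum>P\<in>Parts (length as). Wt R as P) \<longleftrightarrow> R as = ?F R as"
    if "as \<noteq> []" for R as
  proof -
    have "(\<Sum>P\<in>Parts (length as). Wt R as P) =
          Wt R as {{..<length as}} + (\<Sum>P\<in>Parts (length as) - {{{..<length as}}}. Wt R as P)"
      using one[of "length as"] that fin by (simp add: sum.remove)
    then show ?thesis using that W1[OF that] by (auto simp: cumF_def algebra_simps)
  qed
  have loc2: "Wt R as P = Wt R' as P"
    if "P \<in> Parts (length as) - {{{..<length as}}}"
       "\<And>ys. length ys < length as \<Longrightarrow> R ys = R' ys" for R R' as P
  proof (rule loc)
    show "P \<in> Parts (length as)" using that by auto
    fix V assume "V \<in> P"
    then have "card V < length as" "V \<subseteq> {..<length as}"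
      using block_shorter[OF part[of P "length as"]] that by auto
    then show "R (nths as V) = R' (nths as V)" using that(2) length_nths_sub by metis
  qed
  have adm: "adm_wf (measure length) ?F"
    unfolding adm_wf_def
  proof (intro allI impI)
    fix f g :: "'a list \<Rightarrow> complex" and x
    assume "\<forall>z. (z, x) \<in> measure length \<longrightarrow> f z = g z"
    then have "\<And>ys. length ys < length x \<Longrightarrow> f ys = g ys" by auto
    then have "(\<Sum>P\<in>Parts (length x) - {{{..<length x}}}. Wt f x P) =
               (\<Sum>P\<in>Parts (length x) - {{{..<length x}}}. Wt g x P)"
      by (intro sum.cong refl loc2) auto
    then show "?F f x = ?F g x"
      unfolding cumF_def by simp
  qed
  define R0 where "R0 = wfrec (measure length) ?F"
  have fix0: "R0 = ?F R0" unfolding R0_def by (rule wfrec_fixpoint[OF wf_measure adm])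
  have ex: "R0 [] = 0 \<and> (\<forall>as. as \<noteq> [] \<longrightarrow> m as = (\<Sum>P\<in>Parts (length as). Wt R0 as P))"
  proof (intro conjI allI impI)
    have "R0 [] = ?F R0 []" using fun_cong[OF fix0] by blast
    then show "R0 [] = 0" by (simp add: cumF_def)
    fix as :: "'a list" assume "as \<noteq> []"
    moreover have "R0 as = ?F R0 as" using fun_cong[OF fix0] by blast
    ultimately show "m as = (\<Sum>P\<in>Parts (length as). Wt R0 as P)" using eqv by blast
  qed
  have un: "R = R0" if "R [] = 0 \<and> (\<forall>as. as \<noteq> [] \<longrightarrow> m as = (\<Sum>P\<in>Parts (length as). Wt R as P))" for R
  proof
    fix as show "R as = R0 as"
    proof (induction "length as" arbitrary: as rule: less_induct)
      case less
      show ?case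
      proof (cases "as = []")
        case True
        have "R [] = 0" using that by blast
        moreover have "R0 [] = 0" using ex by blast
        ultimately show ?thesis using True by simp
      next
        case False
        have "m as = (\<Sum>P\<in>Parts (length as). Wt R as P)" using that False by blast
        then have "R as = ?F R as" using eqv[OF False] by blast
        also have "\<dots> = ?F R0 as"
        proof -
          have "(\<Sum>P\<in>Parts (length as) - {{{..<length as}}}. Wt R as P) =
               (\<Sum>P\<in>Parts (length as) - {{{..<length as}}}. Wt R0 as P)"
            using less by (intro sum.cong refl loc2) auto
          then show ?thesis unfolding cumF_def by simp
        qed
        also have "\<dots> = R0 as" using fun_cong[OF fix0, of as] by (rule sym)
        finally show ?thesis .
      qed
    qed
  qed
  show ?thesis
  proof (rule ex1I[of _ R0])
    show "R0 [] = 0 \<and> (\<forall>as. as \<noteq> [] \<longrightarrow> m as = (\<Sum>P\<in>Parts (length as). Wt R0 as P))"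
      by (rule ex)
  next
    fix R assume "R [] = 0 \<and> (\<forall>as. as \<noteq> [] \<longrightarrow> m as = (\<Sum>P\<in>Parts (length as). Wt R as P))"
    then show "R = R0" by (rule un)
  qed
qed

lemma cum_local_unique:
  fixes m :: "'a list \<Rightarrow> complex"
  assumes fin: "\<And>n. finite (Parts n)"
    and one: "\<And>n. n > 0 \<Longrightarrow> {{..<n}} \<in> Parts n"
    and part: "\<And>n P. P \<in> Parts n \<Longrightarrow> partition_on {..<n} P"
    and W1: "\<And>R as. as \<noteq> [] \<Longrightarrow> Wt R as {{..<length as}} = R as"
    and loc: "\<And>R R' as P. P \<in> Parts (length as) \<Longrightarrow>
                 (\<And>V. V \<in> P \<Longrightarrow> R (nths as V) = R' (nths as V)) \<Longrightarrow> Wt R as P = Wt R' as P"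
    and R: "R [] = 0 \<and> (\<forall>as. as \<noteq> [] \<longrightarrow> m as = (\<Sum>P\<in>Parts (length as). Wt R as P))"
    and R': "\<And>as. as \<in> lists A \<Longrightarrow> as \<noteq> [] \<Longrightarrow> m as = (\<Sum>P\<in>Parts (length as). Wt R' as P)"
    and as: "as \<in> lists A" "as \<noteq> []"
  shows "R as = R' as"
  using as
proof (induction "length as" arbitrary: as rule: less_induct)
  case less
  have split: "(\<Sum>P\<in>Parts (length as). Wt Q as P) =
          Q as + (\<Sum>P\<in>Parts (length as) - {{{..<length as}}}. Wt Q as P)" for Q
    using one[of "length as"] less.prems fin W1[of as Q] by (simp add: sum.remove)
  have "(\<Sum>P\<in>Parts (length as) - {{{..<length as}}}. Wt R as P) =
        (\<Sum>P\<in>Parts (length as) - {{{..<length as}}}. Wt R' as P)"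
  proof (rule sum.cong[OF refl], rule loc)
    fix P V assume P: "P \<in> Parts (length as) - {{{..<length as}}}" and V: "V \<in> P"
    then have c: "card V < length as" "V \<noteq> {}" "V \<subseteq> {..<length as}"
      using block_shorter[OF part[of P "length as"]] by auto
    have LA: "nths as V \<in> lists A"
      using less.prems(1) set_nths_subset[of as V] by (simp add: in_lists_conv_set subset_iff)
    have fV: "finite V" using c(3) finite_subset by blast
    have len: "length (nths as V) = card V" using length_nths_sub[OF c(3)] .
    have "nths as V \<noteq> []" using c(2) fV len by (metis card_0_eq length_0_conv)
    moreover have "length (nths as V) < length as" using len c(1) by simp
    ultimately show "R (nths as V) = R' (nths as V)"
      using less.hyps LA by blast
  qed auto
  moreover have "m as = (\<Sum>P\<in>Parts (length as). Wt R as P)" using R less.prems by blast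
  moreover note R'[OF less.prems]
  ultimately show ?case unfolding split[of R] split[of R'] by simp
qed


lemma nths_inter_len: "nths xs A = nths xs (A \<inter> {..<length xs})"
  unfolding nths_def
  by (rule arg_cong[where f="map fst"], rule filter_cong[OF refl])
     (auto dest: set_zip_rightD)

lemma nths_cong_len: "A \<inter> {..<length xs} = B \<inter> {..<length xs} \<Longrightarrow> nths xs A = nths xs B"
  by (metis nths_inter_len)

lemma nths_take_sub: "V \<subseteq> {..<j} \<Longrightarrow> nths (take j xs) V = nths xs V"
proof (cases "j \<le> length xs")
  case True
  assume V: "V \<subseteq> {..<j}"
  have "nths xs V = nths (take j xs @ drop j xs) V" by simp
  also have "\<dots> = nths (take j xs) V @ nths (drop j xs) {k. k + j \<in> V}"
    using True nths_append[of "take j xs" "drop j xs" V] by simp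
  also have "{k. k + j \<in> V} = {}" using V by auto
  finally show ?thesis by simp
next
  case False then show ?thesis by simp
qed

lemma nths_final: "n = length xs \<Longrightarrow> nths xs {j..<n} = drop j xs"
  by (simp add: drop_eq_nths) (rule nths_cong_len, auto)

lemma IP_zero: "interval_partitions 0 = {{}}"
  by (auto simp: interval_partitions_def partition_on_empty)

lemma IP_finite: "finite (interval_partitions n)"
  by (rule finite_subset[OF _ finitely_many_partition_on[of "{..<n}"]])
     (auto simp: interval_partitions_def)

lemma NC_finite: "finite (NC n)"
  by (rule finite_subset[OF _ finitely_many_partition_on[of "{..<n}"]])
     (auto simp: NC_def)

definition ivl :: "nat set \<Rightarrow> bool" where
  "ivl V \<longleftrightarrow> (\<forall>i j k. i < j \<and> j < k \<and> i \<in> V \<and> k \<in> V \<longrightarrow> j \<in> V)"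

lemma IP_iff: "P \<in> interval_partitions n \<longleftrightarrow> partition_on {..<n} P \<and> (\<forall>V\<in>P. ivl V)"
  unfolding interval_partitions_def ivl_def by (rule mem_Collect_eq)

lemma IP_part: "P \<in> interval_partitions n \<Longrightarrow> partition_on {..<n} P"
  using IP_iff by blast

lemma IP_ivl: "P \<in> interval_partitions n \<Longrightarrow> V \<in> P \<Longrightarrow> ivl V"
  using IP_iff by blast

lemma ivl_D: "ivl V \<Longrightarrow> i < j \<Longrightarrow> j < k \<Longrightarrow> i \<in> V \<Longrightarrow> k \<in> V \<Longrightarrow> j \<in> V"
  unfolding ivl_def by blast

lemma ivl_atLeastLessThan: "ivl {a..<b}"
  unfolding ivl_def by auto

lemma IP_insert:
  assumes "P' \<in> interval_partitions j" "j < n"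
  shows "insert {j..<n} P' \<in> interval_partitions n"
proof -
  have p: "partition_on {..<j} P'" using assms IP_part by blast
  have u: "\<Union>P' = {..<j}" using partition_onD1[OF p] by simp
  have d: "disjnt {j..<n} (\<Union>P')" using u by (auto simp: disjnt_def)
  have "{..<n} - {j..<n} = {..<j}" using assms(2) by auto
  then have "partition_on {..<n} (insert {j..<n} P')"
    using partition_on_insert[OF d] p assms(2) by auto
  moreover have "\<forall>V\<in>insert {j..<n} P'. ivl V"
    using assms(1) IP_ivl ivl_atLeastLessThan by blast
  ultimately show ?thesis using IP_iff by blast
qed

lemma IP_decomp:
  assumes "P \<in> interval_partitions n" "n > 0"
  shows "\<exists>j<n. P - {{j..<n}} \<in> interval_partitions j \<and> {j..<n} \<in> P"
proof -
  have p: "partition_on {..<n} P" and iv: "\<And>V. V \<in> P \<Longrightarrow> ivl V"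
    using assms IP_part IP_ivl by blast+
  have "n - 1 \<in> \<Union>P" using partition_onD1[OF p] assms(2) by auto
  then obtain V where V: "V \<in> P" "n - 1 \<in> V" by auto
  have Vsub: "V \<subseteq> {..<n}" using p V by (auto simp: partition_on_def)
  have fV: "finite V" using Vsub finite_subset by blast
  define j where "j = Min V"
  have jV: "j \<in> V" using fV V(2) j_def Min_in by blast
  have jle: "\<And>x. x \<in> V \<Longrightarrow> j \<le> x" using fV j_def by simp
  have Veq: "V = {j..<n}"
  proof
    show "V \<subseteq> {j..<n}" using Vsub jle by auto
    show "{j..<n} \<subseteq> V"
    proof
      fix x assume x: "x \<in> {j..<n}"
      show "x \<in> V"
      proof (cases "x = j \<or> x = n - 1")
        case True then show ?thesis using jV V(2) by auto
      next
        case False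
        then have "j < x" "x < n - 1" using x by auto
        then show ?thesis using ivl_D[OF iv[OF V(1)] _ _ jV V(2)] by blast
      qed
    qed
  qed
  have jn: "j < n" using jV Vsub by auto
  have d: "disjnt V (\<Union>(P - {V}))"
    using partition_onD2[OF p] V(1) by (auto simp: disjnt_def disjoint_def)
  have "partition_on {..<n} (insert V (P - {V}))" using p V(1) by (simp add: insert_absorb)
  then have "partition_on ({..<n} - V) (P - {V})" using partition_on_insert[OF d] by blast
  moreover have "{..<n} - V = {..<j}" using Veq jn by auto
  ultimately have "P - {V} \<in> interval_partitions j"
    using iv IP_iff by auto
  then show ?thesis using Veq jn V(1) by auto
qed

lemma IP_rec:
  fixes C :: "nat set \<Rightarrow> complex"
  assumes "n > 0"
  shows "(\<Sum>P\<in>interval_partitions n. \<Prod>V\<in>P. C V) =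
         (\<Sum>j<n. (\<Sum>P\<in>interval_partitions j. \<Prod>V\<in>P. C V) * C {j..<n})"
proof -
  let ?A = "\<lambda>j. insert {j..<n} ` interval_partitions j"
  have eq: "interval_partitions n = (\<Union>j\<in>{..<n}. ?A j)"
  proof
    show "interval_partitions n \<subseteq> (\<Union>j\<in>{..<n}. ?A j)"
    proof
      fix P assume P: "P \<in> interval_partitions n"
      obtain j where "j < n" "P - {{j..<n}} \<in> interval_partitions j" "{j..<n} \<in> P"
        using IP_decomp[OF P assms] by blast
      then show "P \<in> (\<Union>j\<in>{..<n}. ?A j)" by (auto intro!: bexI[of _ j] image_eqI[of _ _ "P - {{j..<n}}"])
    qed
    show "(\<Union>j\<in>{..<n}. ?A j) \<subseteq> interval_partitions n" using IP_insert by auto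
  qed
  have notin: "{j..<n} \<notin> P'" if "P' \<in> interval_partitions j" "j < n" for P' j
  proof
    assume "{j..<n} \<in> P'"
    then have "j \<in> \<Union>P'" using that(2) by (intro UnionI[of "{j..<n}"]) auto
    moreover have "\<Union>P' = {..<j}" using partition_onD1[OF IP_part[OF that(1)]] by simp
    ultimately show False by auto
  qed
  have disj: "?A i \<inter> ?A j = {}" if "i < n" "j < n" "i \<noteq> j" for i j
  proof (rule ccontr)
    assume "?A i \<inter> ?A j \<noteq> {}"
    then obtain P where Pi: "P \<in> ?A i" and Pj: "P \<in> ?A j" by blast
    have "P \<in> interval_partitions n" using Pi IP_insert that by auto
    then have dis: "disjoint P" using IP_part partition_onD2 by blast
    have "{i..<n} \<in> P" "{j..<n} \<in> P" using Pi Pj by auto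
    moreover have "n - 1 \<in> {i..<n} \<inter> {j..<n}" using that by auto
    ultimately have "{i..<n} = {j..<n}" using dis unfolding disjoint_def by blast
    then show False using that
      by (metis atLeastLessThan_inj(1) atLeastLessThan_empty_iff2)
  qed
  have "(\<Sum>P\<in>interval_partitions n. \<Prod>V\<in>P. C V) = (\<Sum>j<n. \<Sum>P\<in>?A j. \<Prod>V\<in>P. C V)"
    unfolding eq by (rule sum.UNION_disjoint) (auto simp: IP_finite disj)
  also have "\<dots> = (\<Sum>j<n. (\<Sum>P\<in>interval_partitions j. \<Prod>V\<in>P. C V) * C {j..<n})"
  proof (rule sum.cong[OF refl])
    fix j assume j: "j \<in> {..<n}"
    have inj: "inj_on (insert {j..<n}) (interval_partitions j)"
    proof (rule inj_onI)
      fix P Q assume "P \<in> interval_partitions j" "Q \<in> interval_partitions j" "insert {j..<n} P = insert {j..<n} Q"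
      then show "P = Q" using notin j by (metis insert_ident lessThan_iff)
    qed
    have fin: "P \<in> interval_partitions j \<Longrightarrow> finite P" for P
      using IP_part finite_elements[of "{..<j}"] by blast
    have "(\<Sum>P\<in>?A j. \<Prod>V\<in>P. C V) = (\<Sum>P\<in>interval_partitions j. \<Prod>V\<in>insert {j..<n} P. C V)"
      by (rule sum.reindex[OF inj, unfolded comp_def])
    also have "\<dots> = (\<Sum>P\<in>interval_partitions j. (\<Prod>V\<in>P. C V) * C {j..<n})"
      using notin j fin by (intro sum.cong refl) (simp add: prod.insert mult.commute)
    also have "\<dots> = (\<Sum>P\<in>interval_partitions j. \<Prod>V\<in>P. C V) * C {j..<n}"
      by (rule sum_distrib_right[symmetric])
    finally show "(\<Sum>P\<in>?A j. \<Prod>V\<in>P. C V) = (\<Sum>P\<in>interval_partitions j. \<Prod>V\<in>P. C V) * C {j..<n}" .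
  qed
  finally show ?thesis .
qed


lemma NC_one: "n > 0 \<Longrightarrow> {{..<n}} \<in> NC n"
  by (auto simp: NC_def noncrossing_def intro: partition_on_space)

lemma IP_one: "n > 0 \<Longrightarrow> {{..<n}} \<in> interval_partitions n"
  using IP_iff partition_on_space ivl_atLeastLessThan[of 0 n]
  by (metis atLeast0LessThan empty_iff lessThan_iff singletonD)

lemma NC_part: "P \<in> NC n \<Longrightarrow> partition_on {..<n} P"
  by (simp add: NC_def)

lemma inner_one: "inner_blocks {A} = {}"
  by (auto simp: inner_blocks_def)

lemma outer_one: "outer_blocks {A} = {A}"
  by (simp add: outer_blocks_def inner_one)

lemma free_cum_char:
  "free_cum m [] = 0 \<and> (\<forall>as. as \<noteq> [] \<longrightarrow> m as = (\<Sum>P\<in>NC (length as). \<Prod>V\<in>P. free_cum m (nths as V)))"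
  unfolding free_cum_def
  by (rule theI'[OF cum_exists_unique[where Wt = "\<lambda>R as P. \<Prod>V\<in>P. R (nths as V)"]])
     (auto simp: NC_finite NC_one NC_part intro: prod.cong)

lemma bool_cum_char:
  "bool_cum m [] = 0 \<and> (\<forall>as. as \<noteq> [] \<longrightarrow> m as = (\<Sum>P\<in>interval_partitions (length as). \<Prod>V\<in>P. bool_cum m (nths as V)))"
  unfolding bool_cum_def
  by (rule theI'[OF cum_exists_unique[where Wt = "\<lambda>R as P. \<Prod>V\<in>P. R (nths as V)"]])
     (auto simp: IP_finite IP_one IP_part intro: prod.cong)

lemma cfree_cum_char:
  "cfree_cum m mpsi [] = 0 \<and> (\<forall>as. as \<noteq> [] \<longrightarrow> m as = (\<Sum>P\<in>NC (length as).
      (\<Prod>V\<in>inner_blocks P. free_cum mpsi (nths as V)) * (\<Prod>U\<in>outer_blocks P. cfree_cum m mpsi (nths as U))))"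
  unfolding cfree_cum_def
  by (rule theI'[OF cum_exists_unique[where Wt = "\<lambda>R as P. (\<Prod>V\<in>inner_blocks P. free_cum mpsi (nths as V)) * (\<Prod>U\<in>outer_blocks P. R (nths as U))"]])
     (auto simp: NC_finite NC_one NC_part inner_one outer_one outer_blocks_def intro: prod.cong)

lemma free_cum_local:
  assumes "as \<in> lists A" "as \<noteq> []"
    and "\<And>bs. bs \<in> lists A \<Longrightarrow> bs \<noteq> [] \<Longrightarrow> m bs = (\<Sum>P\<in>NC (length bs). \<Prod>V\<in>P. R' (nths bs V))"
  shows "free_cum m as = R' as"
  by (rule cum_local_unique[where Wt = "\<lambda>R as P. \<Prod>V\<in>P. R (nths as V)" and m = m and Parts = NC,
        OF _ _ _ _ _ free_cum_char assms(3) assms(1,2)])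
     (auto simp: NC_finite NC_one NC_part intro: prod.cong)

lemma bool_cum_local:
  assumes "as \<in> lists A" "as \<noteq> []"
    and "\<And>bs. bs \<in> lists A \<Longrightarrow> bs \<noteq> [] \<Longrightarrow> m bs = (\<Sum>P\<in>interval_partitions (length bs). \<Prod>V\<in>P. R' (nths bs V))"
  shows "bool_cum m as = R' as"
  by (rule cum_local_unique[where Wt = "\<lambda>R as P. \<Prod>V\<in>P. R (nths as V)" and m = m and Parts = interval_partitions,
        OF _ _ _ _ _ bool_cum_char assms(3) assms(1,2)])
     (auto simp: IP_finite IP_one IP_part intro: prod.cong)

lemma cfree_cum_local:
  assumes "as \<in> lists A" "as \<noteq> []"
    and "\<And>bs. bs \<in> lists A \<Longrightarrow> bs \<noteq> [] \<Longrightarrow> m bs = (\<Sum>P\<in>NC (length bs).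
      (\<Prod>V\<in>inner_blocks P. free_cum mpsi (nths bs V)) * (\<Prod>U\<in>outer_blocks P. R' (nths bs U)))"
  shows "cfree_cum m mpsi as = R' as"
  by (rule cum_local_unique[where Wt = "\<lambda>R as P. (\<Prod>V\<in>inner_blocks P. free_cum mpsi (nths as V)) * (\<Prod>U\<in>outer_blocks P. R (nths as U))"
        and m = m and Parts = NC, OF _ _ _ _ _ cfree_cum_char assms(3) assms(1,2)])
     (auto simp: NC_finite NC_one NC_part inner_one outer_one outer_blocks_def intro: prod.cong)

lemma nths_lists: "as \<in> lists A \<Longrightarrow> nths as V \<in> lists A"
  using set_nths_subset[of as V] by (simp add: in_lists_conv_set subset_iff)

lemma take_lists: "as \<in> lists A \<Longrightarrow> take j as \<in> lists A"
  by (simp add: in_lists_conv_set) (meson in_set_takeD)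

lemma nths_ne: "V \<subseteq> {..<length as} \<Longrightarrow> V \<noteq> {} \<Longrightarrow> nths as V \<noteq> []"
  using length_nths_sub[of V as] finite_subset[of V "{..<length as}"]
  by (metis card_0_eq finite_lessThan length_0_conv)

lemma NC_block_sub: "P \<in> NC n \<Longrightarrow> V \<in> P \<Longrightarrow> V \<subseteq> {..<n}"
  using NC_part by (auto simp: partition_on_def)

lemma NC_block_ne: "P \<in> NC n \<Longrightarrow> V \<in> P \<Longrightarrow> V \<noteq> {}"
  using NC_part by (auto simp: partition_on_def)

lemma NC_P_finite: "P \<in> NC n \<Longrightarrow> finite P"
  using NC_part finite_elements[of "{..<n}" P] by blast

lemma inner_sub: "inner_blocks P \<subseteq> P"
  by (auto simp: inner_blocks_def)

lemma NC_ns_sub: "NC_ns n \<subseteq> NC n"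
  by (auto simp: NC_ns_def)

lemma NC_not_ns: "P \<in> NC n - NC_ns n \<Longrightarrow> \<exists>V\<in>P. card V < 2"
  by (auto simp: NC_ns_def not_le)

locale sps = module smul for smul :: "complex \<Rightarrow> 'b::ring_1 \<Rightarrow> 'b" +
  fixes star :: "'b \<Rightarrow> 'b" and phi :: "'b \<Rightarrow> complex"
  assumes sp: "star_prob_space smul star phi"
begin

lemma phi_add: "phi (x + y) = phi x + phi y"
  using sp by (simp add: star_prob_space_def)

lemma phi_smul: "phi (smul c x) = c * phi x"
  using sp by (simp add: star_prob_space_def)

lemma phi_one: "phi 1 = 1"
  using sp by (simp add: star_prob_space_def)

lemma smul_right: "x * smul c y = smul c (x * y)"
proof -
  have "\<forall>c x y. smul c (x * y) = smul c x * y \<and> smul c (x * y) = x * smul c y"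
    using sp unfolding star_prob_space_def by blast
  then show ?thesis by metis
qed

lemma phi_diff: "phi (x - y) = phi x - phi y"
proof -
  interpret additive phi by standard (rule phi_add)
  show ?thesis by (rule diff)
qed

lemma phi_sum: "phi (sum g A) = (\<Sum>x\<in>A. phi (g x))"
proof -
  interpret additive phi by standard (rule phi_add)
  show ?thesis by (rule sum)
qed

definition Bp :: "'b list \<Rightarrow> complex" where
  "Bp bs = (if length bs < 2 then 0 else phi (Wblock smul phi bs))"

lemma len2_cases: "2 \<le> length h \<Longrightarrow> \<exists>b c rest. h = b # c # rest"
  by (cases h; cases "tl h") auto

lemma Wblock_cons2: "2 \<le> length h \<Longrightarrow> Wblock smul phi (a # h) = a * lam_chain smul phi h"
  using len2_cases by fastforce

lemma lam_chain_cons2: "2 \<le> length h \<Longrightarrow> lam_chain smul phi (a # h) = Lam smul phi a (lam_chain smul phi h)"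
  using len2_cases by fastforce

lemma phi_Lam: "phi (Lam smul phi f g) = 0"
  by (simp add: Lam_def phi_diff phi_smul phi_one)

lemma phi_lam_chain: "2 \<le> length g \<Longrightarrow> phi (lam_chain smul phi g) = 0"
proof -
  assume "2 \<le> length g"
  then obtain a b rest where g: "g = a # b # rest" using len2_cases by blast
  show ?thesis
  proof (cases rest)
    case Nil then show ?thesis using g phi_Lam by simp
  next
    case (Cons c r) then show ?thesis using g phi_Lam by simp
  qed
qed

lemma prod_decomp:
  "2 \<le> length g \<Longrightarrow> prod_list g = lam_chain smul phi g +
      (\<Sum>j<length g. smul (Bp (drop j g)) (prod_list (take j g)))"
proof (induction g)
  case Nil then show ?case by simp
next
  case (Cons a h)
  show ?case
  proof (cases "2 \<le> length h")
    case False
    then obtain b where h: "h = [b]" using Cons.prems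
      by (cases h) (auto simp: Suc_le_eq)
    show ?thesis by (simp add: h Bp_def Lam_def)
  next
    case True
    have IH: "prod_list h = lam_chain smul phi h + (\<Sum>j<length h. smul (Bp (drop j h)) (prod_list (take j h)))"
      using Cons.IH True by blast
    have L: "lam_chain smul phi (a # h) = a * lam_chain smul phi h - smul (phi (a * lam_chain smul phi h)) 1"
      using lam_chain_cons2[OF True] by (simp add: Lam_def)
    have "\<not> length (a # h) < 2" using True by (cases h) auto
    then have "Bp (a # h) = phi (Wblock smul phi (a # h))" unfolding Bp_def by (rule if_not_P)
    then have B: "Bp (a # h) = phi (a * lam_chain smul phi h)"
      by (simp only: Wblock_cons2[OF True])
    have "prod_list (a # h) = a * lam_chain smul phi h + (\<Sum>j<length h. smul (Bp (drop j h)) (a * prod_list (take j h)))"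
      by (simp add: IH distrib_left sum_distrib_left smul_right)
    also have "\<dots> = lam_chain smul phi (a # h) + smul (Bp (a # h)) 1 +
         (\<Sum>j<length h. smul (Bp (drop (Suc j) (a # h))) (prod_list (take (Suc j) (a # h))))"
      by (simp add: L B)
    also have "\<dots> = lam_chain smul phi (a # h) + (\<Sum>j<length (a # h). smul (Bp (drop j (a # h))) (prod_list (take j (a # h))))"
      by (simp del: sum.lessThan_Suc add: sum.lessThan_Suc_shift add.assoc)
    finally show ?thesis .
  qed
qed

lemma phi_prod_rec:
  assumes "bs \<noteq> []" "\<forall>f\<in>set bs. phi f = 0"
  shows "phi (prod_list bs) = (\<Sum>j<length bs. phi (prod_list (take j bs)) * Bp (drop j bs))"
proof (cases "2 \<le> length bs")
  case False
  then obtain a where bs: "bs = [a]" using assms(1)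
    by (cases bs; cases "tl bs") auto
  then show ?thesis using assms(2) by (simp add: Bp_def)
next
  case True
  have "phi (prod_list bs) = phi (lam_chain smul phi bs) +
      (\<Sum>j<length bs. phi (smul (Bp (drop j bs)) (prod_list (take j bs))))"
    by (subst prod_decomp[OF True]) (simp add: phi_add phi_sum)
  then show ?thesis by (simp add: phi_lam_chain[OF True] phi_smul mult.commute)
qed

lemma bool_Bp:
  "bs \<in> lists {f. phi f = 0} \<Longrightarrow>
   phi (prod_list bs) = (\<Sum>P\<in>interval_partitions (length bs). \<Prod>V\<in>P. Bp (nths bs V))"
proof (induction "length bs" arbitrary: bs rule: less_induct)
  case less
  show ?case
  proof (cases "bs = []")
    case True then show ?thesis by (simp add: IP_zero phi_one)
  next
    case False
    have c: "\<forall>f\<in>set bs. phi f = 0" using less.prems by auto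
    have "(\<Sum>P\<in>interval_partitions (length bs). \<Prod>V\<in>P. Bp (nths bs V)) =
      (\<Sum>j<length bs. (\<Sum>P\<in>interval_partitions j. \<Prod>V\<in>P. Bp (nths bs V)) * Bp (nths bs {j..<length bs}))"
      using False by (intro IP_rec) simp
    also have "\<dots> = (\<Sum>j<length bs. phi (prod_list (take j bs)) * Bp (drop j bs))"
    proof (rule sum.cong[OF refl])
      fix j assume j: "j \<in> {..<length bs}"
      have "(\<Sum>P\<in>interval_partitions j. \<Prod>V\<in>P. Bp (nths bs V)) =
            (\<Sum>P\<in>interval_partitions j. \<Prod>V\<in>P. Bp (nths (take j bs) V))"
      proof (intro sum.cong refl prod.cong)
        fix P V assume "P \<in> interval_partitions j" "V \<in> P"
        then have "V \<subseteq> {..<j}" using IP_part by (auto simp: partition_on_def)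
        then show "Bp (nths bs V) = Bp (nths (take j bs) V)" by (simp add: nths_take_sub)
      qed
      also have "\<dots> = phi (prod_list (take j bs))"
        using less.hyps[of "take j bs"] j take_lists[OF less.prems] by simp
      finally show "(\<Sum>P\<in>interval_partitions j. \<Prod>V\<in>P. Bp (nths bs V)) * Bp (nths bs {j..<length bs}) =
          phi (prod_list (take j bs)) * Bp (drop j bs)" by (simp add: nths_final)
    qed
    also have "\<dots> = phi (prod_list bs)" using phi_prod_rec[OF False c] by simp
    finally show ?thesis by simp
  qed
qed

lemma bool_cum_mphi:
  "as \<in> lists {f. phi f = 0} \<Longrightarrow> as \<noteq> [] \<Longrightarrow> bool_cum (\<lambda>as. phi (prod_list as)) as = Bp as"
  by (rule bool_cum_local[where A = "{f. phi f = 0}"]) (auto intro: bool_Bp)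

lemma Bp_small: "V \<subseteq> {..<length bs} \<Longrightarrow> card V < 2 \<Longrightarrow> Bp (nths bs V) = 0"
  by (simp add: Bp_def length_nths_sub)

lemma Bp_big: "V \<subseteq> {..<length bs} \<Longrightarrow> 2 \<le> card V \<Longrightarrow> Bp (nths bs V) = phi (Wblock smul phi (nths bs V))"
  by (simp add: Bp_def length_nths_sub)

lemma Psi_sum:
  assumes "bs \<noteq> []"
  shows "Psi_t smul phi t bs = (\<Sum>P\<in>NC (length bs). \<Prod>V\<in>P. of_real t * Bp (nths bs V))"
proof -
  let ?F = "\<lambda>P. \<Prod>V\<in>P. of_real t * Bp (nths bs V)"
  have "(\<Sum>P\<in>NC (length bs). ?F P) = (\<Sum>P\<in>NC_ns (length bs). ?F P)"
  proof (rule sum.mono_neutral_right[OF NC_finite NC_ns_sub])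
    show "\<forall>P\<in>NC (length bs) - NC_ns (length bs). ?F P = 0"
    proof
      fix P assume P: "P \<in> NC (length bs) - NC_ns (length bs)"
      then obtain V where V: "V \<in> P" "card V < 2" using NC_not_ns by blast
      have "Bp (nths bs V) = 0" using Bp_small V P NC_block_sub by blast
      then show "?F P = 0" using V(1) NC_P_finite P by (auto intro: prod_zero)
    qed
  qed
  also have "\<dots> = (\<Sum>P\<in>NC_ns (length bs). of_real t ^ card P * (\<Prod>V\<in>P. phi (Wblock smul phi (nths bs V))))"
  proof (rule sum.cong[OF refl])
    fix P assume P: "P \<in> NC_ns (length bs)"
    have "?F P = of_real t ^ card P * (\<Prod>V\<in>P. Bp (nths bs V))"
      by (simp add: prod.distrib)
    also have "(\<Prod>V\<in>P. Bp (nths bs V)) = (\<Prod>V\<in>P. phi (Wblock smul phi (nths bs V)))"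
      using P NC_block_sub Bp_big by (intro prod.cong refl) (auto simp: NC_ns_def)
    finally show "?F P = of_real t ^ card P * (\<Prod>V\<in>P. phi (Wblock smul phi (nths bs V)))" .
  qed
  finally show ?thesis using assms by (simp add: Psi_t_def)
qed

lemma free_cum_Psi:
  "as \<in> lists {f. phi f = 0} \<Longrightarrow> as \<noteq> [] \<Longrightarrow> free_cum (Psi_t smul phi t) as = of_real t * Bp as"
  by (rule free_cum_local[where A = "{f. phi f = 0}"]) (auto intro: Psi_sum)

lemma Phi_sum:
  assumes "bs \<noteq> []"
  shows "Phi_t smul phi t bs = (\<Sum>P\<in>NC (length bs).
     (\<Prod>V\<in>inner_blocks P. of_real t * Bp (nths bs V)) * (\<Prod>U\<in>outer_blocks P. of_real (1 + t) * Bp (nths bs U)))"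
proof -
  let ?F = "\<lambda>P. (\<Prod>V\<in>inner_blocks P. of_real t * Bp (nths bs V)) * (\<Prod>U\<in>outer_blocks P. of_real (1 + t) * Bp (nths bs U))"
  have "(\<Sum>P\<in>NC (length bs). ?F P) = (\<Sum>P\<in>NC_ns (length bs). ?F P)"
  proof (rule sum.mono_neutral_right[OF NC_finite NC_ns_sub])
    show "\<forall>P\<in>NC (length bs) - NC_ns (length bs). ?F P = 0"
    proof
      fix P assume P: "P \<in> NC (length bs) - NC_ns (length bs)"
      then obtain V where V: "V \<in> P" "card V < 2" using NC_not_ns by blast
      have z: "Bp (nths bs V) = 0" using Bp_small V P NC_block_sub by blast
      have fP: "finite P" using NC_P_finite P by blast
      have fi: "finite (inner_blocks P)" "finite (outer_blocks P)"
        using fP inner_sub by (auto simp: outer_blocks_def intro: finite_subset)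
      show "?F P = 0"
      proof (cases "V \<in> inner_blocks P")
        case True then show ?thesis using z fi by (auto intro!: prod_zero)
      next
        case False then have "V \<in> outer_blocks P" using V(1) by (simp add: outer_blocks_def)
        then show ?thesis using z fi by (auto intro!: prod_zero)
      qed
    qed
  qed
  also have "\<dots> = (\<Sum>P\<in>NC_ns (length bs). of_real (1 + t) ^ card (outer_blocks P) *
        of_real t ^ card (inner_blocks P) * (\<Prod>V\<in>P. phi (Wblock smul phi (nths bs V))))"
  proof (rule sum.cong[OF refl])
    fix P assume P: "P \<in> NC_ns (length bs)"
    have fP: "finite P" using NC_P_finite P NC_ns_sub by blast
    have "?F P = of_real (1 + t) ^ card (outer_blocks P) * of_real t ^ card (inner_blocks P) *
        ((\<Prod>V\<in>inner_blocks P. Bp (nths bs V)) * (\<Prod>V\<in>outer_blocks P. Bp (nths bs V)))"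
      by (simp add: prod.distrib)
    also have "(\<Prod>V\<in>inner_blocks P. Bp (nths bs V)) * (\<Prod>V\<in>outer_blocks P. Bp (nths bs V)) =
        (\<Prod>V\<in>P. Bp (nths bs V))"
      unfolding outer_blocks_def using prod.subset_diff[OF inner_sub fP, of "\<lambda>V. Bp (nths bs V)"]
      by (simp add: mult.commute)
    also have "(\<Prod>V\<in>P. Bp (nths bs V)) = (\<Prod>V\<in>P. phi (Wblock smul phi (nths bs V)))"
      using P NC_block_sub Bp_big by (intro prod.cong refl) (auto simp: NC_ns_def)
    finally show "?F P = of_real (1 + t) ^ card (outer_blocks P) *
        of_real t ^ card (inner_blocks P) * (\<Prod>V\<in>P. phi (Wblock smul phi (nths bs V)))" .
  qed
  finally show ?thesis using assms by (simp add: Phi_t_def)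
qed

lemma cfree_Phi:
  assumes "as \<in> lists {f. phi f = 0}" "as \<noteq> []"
  shows "cfree_cum (Phi_t smul phi t) (Psi_t smul phi t) as = of_real (1 + t) * Bp as"
proof (rule cfree_cum_local[where A = "{f. phi f = 0}", OF assms])
  fix bs assume bs: "bs \<in> lists {f. phi f = 0}" "bs \<noteq> []"
  show "Phi_t smul phi t bs = (\<Sum>P\<in>NC (length bs).
      (\<Prod>V\<in>inner_blocks P. free_cum (Psi_t smul phi t) (nths bs V)) *
      (\<Prod>U\<in>outer_blocks P. of_real (1 + t) * Bp (nths bs U)))"
    unfolding Phi_sum[OF bs(2)]
  proof (intro sum.cong refl arg_cong2[where f = "(*)"] prod.cong)
    fix P V assume P: "P \<in> NC (length bs)" and V: "V \<in> inner_blocks P"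
    have "V \<in> P" using V inner_sub by blast
    then have "nths bs V \<noteq> []" using P NC_block_sub NC_block_ne nths_ne by blast
    then show "of_real t * Bp (nths bs V) = free_cum (Psi_t smul phi t) (nths bs V)"
      using free_cum_Psi[OF nths_lists[OF bs(1)]] by simp
  qed
qed

end


type_synonym wt = "nat set \<Rightarrow> complex"

fun Qf :: "nat \<Rightarrow> wt \<Rightarrow> wt \<Rightarrow> wt \<Rightarrow> nat set \<Rightarrow> nat set \<Rightarrow> complex" where
  "Qf 0 g G T B S = g B * T S"
| "Qf (Suc k) g G T B S = g B * T S + (\<Sum>y\<in>S. G (S \<inter> {y<..}) * Qf k g G T (insert y B) (S \<inter> {..<y}))"

lemma card_below_less: "finite (S::nat set) \<Longrightarrow> y \<in> S \<Longrightarrow> card (S \<inter> {..<y}) < card S"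
proof -
  assume a: "finite S" "y \<in> S"
  have "y \<notin> S \<inter> {..<y}" by simp
  then have "S \<inter> {..<y} \<subset> S" using a by blast
  then show ?thesis using a psubset_card_mono by blast
qed

lemma card_above_less: "finite (S::nat set) \<Longrightarrow> y \<in> S \<Longrightarrow> card (S \<inter> {y<..}) < card S"
proof -
  assume a: "finite S" "y \<in> S"
  have "y \<notin> S \<inter> {y<..}" by simp
  then have "S \<inter> {y<..} \<subset> S" using a by blast
  then show ?thesis using a psubset_card_mono by blast
qed

lemma Qf_stable:
  "finite S \<Longrightarrow> card S \<le> k \<Longrightarrow> card S \<le> k' \<Longrightarrow> Qf k g G T B S = Qf k' g G T B S"
proof (induction k arbitrary: k' B S)
  case 0
  then have "S = {}" by simp
  then show ?case by (cases k') simp_all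
next
  case (Suc k)
  show ?case
  proof (cases k')
    case 0
    then have "S = {}" using Suc by simp
    then show ?thesis using 0 by simp
  next
    case (Suc k'')
    have "Qf k g G T (insert y B) (S \<inter> {..<y}) = Qf k'' g G T (insert y B) (S \<inter> {..<y})" if "y \<in> S" for y
    proof -
      have "card (S \<inter> {..<y}) < card S" using card_below_less Suc.prems(1) that by blast
      then show ?thesis using Suc.IH[of "S \<inter> {..<y}" k''] Suc.prems \<open>k' = Suc k''\<close> by simp
    qed
    then show ?thesis using \<open>k' = Suc k''\<close> by (simp cong: sum.cong)
  qed
qed

definition Qr :: "wt \<Rightarrow> wt \<Rightarrow> wt \<Rightarrow> nat set \<Rightarrow> nat set \<Rightarrow> complex" where
  "Qr g G T B S = Qf (card S) g G T B S"

lemma Qr_empty: "Qr g G T B {} = g B * T {}"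
  by (simp add: Qr_def)

lemma Qr_rec:
  assumes "finite S"
  shows "Qr g G T B S = g B * T S + (\<Sum>y\<in>S. G (S \<inter> {y<..}) * Qr g G T (insert y B) (S \<inter> {..<y}))"
proof (cases "S = {}")
  case True then show ?thesis by (simp add: Qr_def)
next
  case False
  then obtain m where m: "card S = Suc m" using assms by (cases "card S") auto
  have "Qf m g G T (insert y B) (S \<inter> {..<y}) = Qr g G T (insert y B) (S \<inter> {..<y})" if "y \<in> S" for y
    unfolding Qr_def
    using card_below_less[OF assms that] m assms by (intro Qf_stable) auto
  then show ?thesis unfolding Qr_def m by (simp cong: sum.cong)
qed

lemma Qr_cong:
  assumes "finite S"
    and "\<And>X. X \<subseteq> S \<Longrightarrow> G X = G' X" "\<And>X. X \<subseteq> S \<Longrightarrow> T X = T' X"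
    and "\<And>X. X \<subseteq> S \<Longrightarrow> g (B \<union> X) = g' (B \<union> X)"
  shows "Qr g G T B S = Qr g' G' T' B S"
  using assms
proof (induction "card S" arbitrary: S B rule: less_induct)
  case less
  have gB: "g B = g' B" using less.prems(4)[of "{}"] by simp
  have "Qr g G T (insert y B) (S \<inter> {..<y}) = Qr g' G' T' (insert y B) (S \<inter> {..<y})" if y: "y \<in> S" for y
  proof (rule less.hyps)
    show "card (S \<inter> {..<y}) < card S" using card_below_less less.prems(1) y by blast
    show "finite (S \<inter> {..<y})" using less.prems(1) by simp
    show "G X = G' X" if "X \<subseteq> S \<inter> {..<y}" for X using that less.prems(2) by blast
    show "T X = T' X" if "X \<subseteq> S \<inter> {..<y}" for X using that less.prems(3) by blast
    show "g (insert y B \<union> X) = g' (insert y B \<union> X)" if "X \<subseteq> S \<inter> {..<y}" for X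
      using less.prems(4)[of "insert y X"] that y by auto
  qed
  moreover have "G (S \<inter> {y<..}) = G' (S \<inter> {y<..})" for y using less.prems(2) by blast
  ultimately show ?case
    using gB less.prems(3)[of S] by (simp add: Qr_rec[OF less.prems(1)] cong: sum.cong)
qed

lemma Qr_scale:
  assumes "finite S"
  shows "Qr (\<lambda>V. c * g V) G T B S = c * Qr g G T B S"
  using assms
proof (induction "card S" arbitrary: S B rule: less_induct)
  case less
  have "Qr (\<lambda>V. c * g V) G T (insert y B) (S \<inter> {..<y}) = c * Qr g G T (insert y B) (S \<inter> {..<y})"
    if "y \<in> S" for y
    using less.hyps card_below_less[OF less.prems that] less.prems by simp
  then show ?case
    by (simp add: Qr_rec[OF less.prems] sum_distrib_left algebra_simps cong: sum.cong)
qed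

lemma Qr_diff:
  assumes "finite S"
  shows "Qr g G (\<lambda>X. T1 X - T2 X) B S = Qr g G T1 B S - Qr g G T2 B S"
  using assms
proof (induction "card S" arbitrary: S B rule: less_induct)
  case less
  have "Qr g G (\<lambda>X. T1 X - T2 X) (insert y B) (S \<inter> {..<y}) =
        Qr g G T1 (insert y B) (S \<inter> {..<y}) - Qr g G T2 (insert y B) (S \<inter> {..<y})"
    if "y \<in> S" for y
    using less.hyps card_below_less[OF less.prems that] less.prems by simp
  then have "(\<Sum>y\<in>S. G (S \<inter> {y<..}) * Qr g G (\<lambda>X. T1 X - T2 X) (insert y B) (S \<inter> {..<y})) =
    (\<Sum>y\<in>S. G (S \<inter> {y<..}) * Qr g G T1 (insert y B) (S \<inter> {..<y}) -
               G (S \<inter> {y<..}) * Qr g G T2 (insert y B) (S \<inter> {..<y}))"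
    by (intro sum.cong refl) (simp add: right_diff_distrib)
  then show ?case
    unfolding Qr_rec[OF less.prems, of g G] by (simp add: sum_subtractf algebra_simps)
qed

definition dlt :: wt where "dlt X = (if X = {} then 1 else 0)"

lemma above_empty_iff: "finite U \<Longrightarrow> y \<in> U \<Longrightarrow> U \<inter> {y<..} = {} \<longleftrightarrow> y = Max U"
proof
  assume a: "finite U" "y \<in> U" "U \<inter> {y<..} = {}"
  then have "\<forall>x\<in>U. x \<le> y" by (auto simp: not_less[symmetric])
  then show "y = Max U" using a by (intro Max_eqI[symmetric]) auto
next
  assume a: "finite U" "y \<in> U" "y = Max U"
  then show "U \<inter> {y<..} = {}" using Max_ge[OF a(1)] by (auto simp: not_less[symmetric])
qed

lemma sum_at_max:
  assumes "finite U" "U \<noteq> {}"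
  shows "(\<Sum>y\<in>U. dlt (U \<inter> {y<..}) * f y) = f (Max U)"
proof -
  have "(\<Sum>y\<in>U. dlt (U \<inter> {y<..}) * f y) = dlt (U \<inter> {Max U<..}) * f (Max U) +
        (\<Sum>y\<in>U - {Max U}. dlt (U \<inter> {y<..}) * f y)"
    by (rule sum.remove[OF assms(1) Max_in[OF assms]])
  also have "(\<Sum>y\<in>U - {Max U}. dlt (U \<inter> {y<..}) * f y) = 0"
    using assms above_empty_iff[OF assms(1)] by (intro sum.neutral) (auto simp: dlt_def)
  also have "dlt (U \<inter> {Max U<..}) = 1"
    using assms above_empty_iff[OF assms(1), of "Max U"] by (simp add: dlt_def)
  finally show ?thesis by simp
qed

lemma Qr_dlt:
  assumes "finite U"
  shows "Qr g dlt dlt B U = g (B \<union> U)"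
  using assms
proof (induction "card U" arbitrary: U B rule: less_induct)
  case less
  show ?case
  proof (cases "U = {}")
    case True then show ?thesis by (simp add: Qr_empty dlt_def)
  next
    case False
    have M: "Max U \<in> U" using False less.prems by simp
    have "Qr g dlt dlt B U = (\<Sum>y\<in>U. dlt (U \<inter> {y<..}) * Qr g dlt dlt (insert y B) (U \<inter> {..<y}))"
      using False by (simp add: Qr_rec[OF less.prems] dlt_def)
    also have "\<dots> = Qr g dlt dlt (insert (Max U) B) (U \<inter> {..<Max U})"
      by (rule sum_at_max[OF less.prems False])
    also have "\<dots> = g (insert (Max U) B \<union> (U \<inter> {..<Max U}))"
      using less.hyps card_below_less[OF less.prems M] less.prems by simp
    also have "insert (Max U) B \<union> (U \<inter> {..<Max U}) = B \<union> U"
      using M less.prems by (auto simp: less_le)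
    finally show ?thesis .
  qed
qed

fun RunsF :: "nat \<Rightarrow> wt \<Rightarrow> wt \<Rightarrow> nat set \<Rightarrow> nat set \<Rightarrow> complex" where
  "RunsF 0 G T U S = T S"
| "RunsF (Suc k) G T U S = (if U = {} then T S else
     G (S \<inter> {Max U<..}) * RunsF k G T (U - {Max U}) (S \<inter> {..<Max U}))"

definition Runs :: "wt \<Rightarrow> wt \<Rightarrow> nat set \<Rightarrow> nat set \<Rightarrow> complex" where
  "Runs G T U S = RunsF (card U) G T U S"

lemma Runs_empty: "Runs G T {} S = T S"
  by (simp add: Runs_def)

lemma Runs_max:
  assumes "finite U" "U \<noteq> {}"
  shows "Runs G T U S = G (S \<inter> {Max U<..}) * Runs G T (U - {Max U}) (S \<inter> {..<Max U})"
proof -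
  have p: "0 < card U" using assms by (simp add: card_gt_0_iff)
  have c: "card U = Suc (card (U - {Max U}))"
    using p card_Diff_singleton[OF Max_in[OF assms]] by simp
  show ?thesis unfolding Runs_def c using assms by simp
qed

lemma Runs_split:
  assumes "finite U" "y \<in> U"
  shows "Runs G T U S = Runs G G (U \<inter> {y<..}) (S \<inter> {y<..}) * Runs G T (U \<inter> {..<y}) (S \<inter> {..<y})"
  using assms
proof (induction "card U" arbitrary: U S rule: less_induct)
  case less
  have ne: "U \<noteq> {}" using less.prems by auto
  define m where "m = Max U"
  have mU: "m \<in> U" using Max_in[OF less.prems(1) ne] m_def by simp
  have ym: "y \<le> m" using Max_ge[OF less.prems] m_def by simp
  show ?case
  proof (cases "y = m")
    case True
    have e: "U \<inter> {y<..} = {}" using above_empty_iff[OF less.prems] True m_def by simp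
    have "U - {Max U} = U \<inter> {..<y}" using True m_def ym Max_ge[OF less.prems(1)]
      by (auto simp: less_le)
    then show ?thesis using Runs_max[OF less.prems(1) ne] e True m_def by (simp add: Runs_empty)
  next
    case False
    then have ym': "y < m" using ym by simp
    have yU': "y \<in> U - {m}" using less.prems False by simp
    have cU': "card (U - {m}) < card U" by (rule card_Diff1_less[OF less.prems(1) mU])
    have IH: "Runs G T (U - {m}) (S \<inter> {..<m}) =
       Runs G G ((U - {m}) \<inter> {y<..}) ((S \<inter> {..<m}) \<inter> {y<..}) *
       Runs G T ((U - {m}) \<inter> {..<y}) ((S \<inter> {..<m}) \<inter> {..<y})"
      using less.hyps[OF cU'] less.prems(1) yU' by simp
    have ne1: "U \<inter> {y<..} \<noteq> {}" using mU ym' by auto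
    have f1: "finite (U \<inter> {y<..})" using less.prems(1) by simp
    have M1: "Max (U \<inter> {y<..}) = m"
      using mU ym' Max_ge[OF less.prems(1)] m_def less.prems(1) by (intro Max_eqI) auto
    have "Runs G G (U \<inter> {y<..}) (S \<inter> {y<..}) =
        G ((S \<inter> {y<..}) \<inter> {m<..}) * Runs G G ((U \<inter> {y<..}) - {m}) ((S \<inter> {y<..}) \<inter> {..<m})"
      using Runs_max[OF f1 ne1] M1 by simp
    moreover have "(S \<inter> {y<..}) \<inter> {m<..} = S \<inter> {m<..}" using ym' by auto
    moreover have "(U \<inter> {y<..}) - {m} = (U - {m}) \<inter> {y<..}" by auto
    moreover have "(S \<inter> {y<..}) \<inter> {..<m} = (S \<inter> {..<m}) \<inter> {y<..}" by auto
    moreover have "(U - {m}) \<inter> {..<y} = U \<inter> {..<y}" using ym' by auto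
    moreover have "(S \<inter> {..<m}) \<inter> {..<y} = S \<inter> {..<y}" using ym' by auto
    ultimately show ?thesis
      using Runs_max[OF less.prems(1) ne] IH m_def by (simp add: mult.assoc)
  qed
qed

definition Sel :: "wt \<Rightarrow> wt \<Rightarrow> wt \<Rightarrow> nat set \<Rightarrow> complex" where
  "Sel F G T S = (\<Sum>U\<in>Pow S. F U * Runs G T U S)"

lemma Sel_dlt:
  assumes "finite S"
  shows "Sel dlt G T S = T S"
proof -
  have "Sel dlt G T S = dlt {} * Runs G T {} S + (\<Sum>U\<in>Pow S - {{}}. dlt U * Runs G T U S)"
    unfolding Sel_def using assms by (intro sum.remove) auto
  also have "(\<Sum>U\<in>Pow S - {{}}. dlt U * Runs G T U S) = 0"
    by (intro sum.neutral) (auto simp: dlt_def)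
  moreover have "dlt {} = 1" by (simp add: dlt_def)
  ultimately show ?thesis by (simp add: Runs_empty)
qed

lemma pow_split:
  fixes S :: "nat set"
  assumes "finite S"
  shows "(\<Sum>U\<in>Pow S. \<Sum>y\<in>U. f U y) =
         (\<Sum>y\<in>S. \<Sum>U1\<in>Pow (S \<inter> {y<..}). \<Sum>U2\<in>Pow (S \<inter> {..<y}). f (U1 \<union> insert y U2) y)"
proof -
  have "(\<Sum>U\<in>Pow S. \<Sum>y\<in>U. f U y) = (\<Sum>U\<in>Pow S. \<Sum>y\<in>{y\<in>S. y \<in> U}. f U y)"
    by (intro sum.cong refl) auto
  also have "\<dots> = (\<Sum>y\<in>S. \<Sum>U\<in>{U\<in>Pow S. y \<in> U}. f U y)"
    using assms by (intro sum.swap_restrict) auto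
  also have "\<dots> = (\<Sum>y\<in>S. \<Sum>U1\<in>Pow (S \<inter> {y<..}). \<Sum>U2\<in>Pow (S \<inter> {..<y}). f (U1 \<union> insert y U2) y)"
  proof (rule sum.cong[OF refl])
    fix y assume y: "y \<in> S"
    let ?h = "\<lambda>p. fst p \<union> insert y (snd p)"
    have inj: "inj_on ?h (Pow (S \<inter> {y<..}) \<times> Pow (S \<inter> {..<y}))"
    proof (rule inj_onI)
      fix p q assume p: "p \<in> Pow (S \<inter> {y<..}) \<times> Pow (S \<inter> {..<y})"
        and q: "q \<in> Pow (S \<inter> {y<..}) \<times> Pow (S \<inter> {..<y})" and e: "?h p = ?h q"
      have "fst p = ?h p \<inter> {y<..}" using p by auto
      also have "\<dots> = ?h q \<inter> {y<..}" by (simp only: e)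
      also have "\<dots> = fst q" using q by auto
      finally have 1: "fst p = fst q" .
      have "snd p = ?h p \<inter> {..<y}" using p by auto
      also have "\<dots> = ?h q \<inter> {..<y}" by (simp only: e)
      also have "\<dots> = snd q" using q by auto
      finally have 2: "snd p = snd q" .
      show "p = q" using 1 2 by (simp add: prod_eq_iff)
    qed
    have img: "?h ` (Pow (S \<inter> {y<..}) \<times> Pow (S \<inter> {..<y})) = {U\<in>Pow S. y \<in> U}"
    proof
      show "?h ` (Pow (S \<inter> {y<..}) \<times> Pow (S \<inter> {..<y})) \<subseteq> {U\<in>Pow S. y \<in> U}" using y by auto
      show "{U\<in>Pow S. y \<in> U} \<subseteq> ?h ` (Pow (S \<inter> {y<..}) \<times> Pow (S \<inter> {..<y}))"
      proof
        fix U assume U: "U \<in> {U\<in>Pow S. y \<in> U}"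
        have "U = ?h (U \<inter> {y<..}, U \<inter> {..<y})" using U by auto
        moreover have "(U \<inter> {y<..}, U \<inter> {..<y}) \<in> Pow (S \<inter> {y<..}) \<times> Pow (S \<inter> {..<y})" using U by auto
        ultimately show "U \<in> ?h ` (Pow (S \<inter> {y<..}) \<times> Pow (S \<inter> {..<y}))" by blast
      qed
    qed
    have "(\<Sum>U\<in>{U\<in>Pow S. y \<in> U}. f U y) = (\<Sum>p\<in>Pow (S \<inter> {y<..}) \<times> Pow (S \<inter> {..<y}). f (?h p) y)"
      unfolding img[symmetric] by (rule sum.reindex[OF inj, unfolded comp_def])
    also have "\<dots> = (\<Sum>U1\<in>Pow (S \<inter> {y<..}). \<Sum>U2\<in>Pow (S \<inter> {..<y}). f (U1 \<union> insert y U2) y)"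
      by (simp add: sum.cartesian_product split_beta)
    finally show "(\<Sum>U\<in>{U\<in>Pow S. y \<in> U}. f U y) = (\<Sum>U1\<in>Pow (S \<inter> {y<..}). \<Sum>U2\<in>Pow (S \<inter> {..<y}). f (U1 \<union> insert y U2) y)" .
  qed
  finally show ?thesis .
qed

lemma CompG:
  assumes "finite S"
  shows "(\<Sum>U\<in>Pow S. Qr g A T0 B U * Runs G T U S) = Qr g (Sel A G G) (Sel T0 G T) B S"
  using assms
proof (induction "card S" arbitrary: S B rule: less_induct)
  case less
  have fS: "finite S" by (rule less.prems)
  have finU: "U \<in> Pow S \<Longrightarrow> finite U" for U using fS finite_subset by blast
  have "(\<Sum>U\<in>Pow S. Qr g A T0 B U * Runs G T U S) =
        (\<Sum>U\<in>Pow S. g B * (T0 U * Runs G T U S) +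
           (\<Sum>y\<in>U. A (U \<inter> {y<..}) * Qr g A T0 (insert y B) (U \<inter> {..<y}) * Runs G T U S))"
    by (intro sum.cong refl) (simp add: Qr_rec[OF finU] distrib_right sum_distrib_right mult.assoc)
  also have "\<dots> = g B * Sel T0 G T S +
        (\<Sum>U\<in>Pow S. \<Sum>y\<in>U. A (U \<inter> {y<..}) * Qr g A T0 (insert y B) (U \<inter> {..<y}) * Runs G T U S)"
    by (simp add: sum.distrib Sel_def sum_distrib_left)
  also have "(\<Sum>U\<in>Pow S. \<Sum>y\<in>U. A (U \<inter> {y<..}) * Qr g A T0 (insert y B) (U \<inter> {..<y}) * Runs G T U S) =
     (\<Sum>y\<in>S. \<Sum>U1\<in>Pow (S \<inter> {y<..}). \<Sum>U2\<in>Pow (S \<inter> {..<y}).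
        A ((U1 \<union> insert y U2) \<inter> {y<..}) * Qr g A T0 (insert y B) ((U1 \<union> insert y U2) \<inter> {..<y}) *
        Runs G T (U1 \<union> insert y U2) S)"
    by (rule pow_split[OF fS, of "\<lambda>U y. A (U \<inter> {y<..}) * Qr g A T0 (insert y B) (U \<inter> {..<y}) * Runs G T U S"])
  also have "\<dots> = (\<Sum>y\<in>S. \<Sum>U1\<in>Pow (S \<inter> {y<..}). \<Sum>U2\<in>Pow (S \<inter> {..<y}).
        (A U1 * Runs G G U1 (S \<inter> {y<..})) * (Qr g A T0 (insert y B) U2 * Runs G T U2 (S \<inter> {..<y})))"
  proof (intro sum.cong refl)
    fix y U1 U2 assume y: "y \<in> S" and U1: "U1 \<in> Pow (S \<inter> {y<..})" and U2: "U2 \<in> Pow (S \<inter> {..<y})"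
    let ?U = "U1 \<union> insert y U2"
    have a: "?U \<inter> {y<..} = U1" "?U \<inter> {..<y} = U2" using U1 U2 by auto
    have "finite ?U" using U1 U2 fS finite_subset by auto
    then have "Runs G T ?U S = Runs G G U1 (S \<inter> {y<..}) * Runs G T U2 (S \<inter> {..<y})"
      using Runs_split[of ?U y G T S] a by simp
    then show "A (?U \<inter> {y<..}) * Qr g A T0 (insert y B) (?U \<inter> {..<y}) * Runs G T ?U S =
        (A U1 * Runs G G U1 (S \<inter> {y<..})) * (Qr g A T0 (insert y B) U2 * Runs G T U2 (S \<inter> {..<y}))"
      using a by (simp add: mult_ac)
  qed
  also have "\<dots> = (\<Sum>y\<in>S. Sel A G G (S \<inter> {y<..}) * Qr g (Sel A G G) (Sel T0 G T) (insert y B) (S \<inter> {..<y}))"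
  proof (rule sum.cong[OF refl])
    fix y assume y: "y \<in> S"
    have IH: "(\<Sum>U\<in>Pow (S \<inter> {..<y}). Qr g A T0 (insert y B) U * Runs G T U (S \<inter> {..<y})) =
        Qr g (Sel A G G) (Sel T0 G T) (insert y B) (S \<inter> {..<y})"
      using less.hyps[OF card_below_less[OF fS y]] fS by simp
    show "(\<Sum>U1\<in>Pow (S \<inter> {y<..}). \<Sum>U2\<in>Pow (S \<inter> {..<y}).
        (A U1 * Runs G G U1 (S \<inter> {y<..})) * (Qr g A T0 (insert y B) U2 * Runs G T U2 (S \<inter> {..<y}))) =
        Sel A G G (S \<inter> {y<..}) * Qr g (Sel A G G) (Sel T0 G T) (insert y B) (S \<inter> {..<y})"
      unfolding IH[symmetric] Sel_def by (simp add: sum_product)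
  qed
  finally show ?case by (simp add: Qr_rec[OF fS])
qed

lemma ExplQ:
  assumes "finite S"
  shows "Qr g G T B S = (\<Sum>U\<in>Pow S. g (B \<union> U) * Runs G T U S)"
proof -
  have "(\<Sum>U\<in>Pow S. g (B \<union> U) * Runs G T U S) = (\<Sum>U\<in>Pow S. Qr g dlt dlt B U * Runs G T U S)"
    using assms by (intro sum.cong refl) (simp add: Qr_dlt finite_subset)
  also have "\<dots> = Qr g (Sel dlt G G) (Sel dlt G T) B S" by (rule CompG[OF assms])
  also have "\<dots> = Qr g G T B S"
    using assms by (intro Qr_cong) (auto simp: Sel_dlt finite_subset)
  finally show ?thesis by simp
qed

definition IrrQ :: "wt \<Rightarrow> wt \<Rightarrow> nat set \<Rightarrow> complex" where
  "IrrQ g G K = Qr g G dlt {Max K} (K - {Max K})"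

lemma Comp:
  assumes "finite S" "\<forall>x\<in>S. x < m"
  shows "Qr (IrrQ r A) G T {m} S = Qr r (Sel A G G) T {m} S"
proof -
  have "Qr (IrrQ r A) G T {m} S = (\<Sum>U\<in>Pow S. IrrQ r A ({m} \<union> U) * Runs G T U S)"
    by (rule ExplQ[OF assms(1)])
  also have "\<dots> = (\<Sum>U\<in>Pow S. Qr r A dlt {m} U * Runs G T U S)"
  proof (intro sum.cong refl)
    fix U assume U: "U \<in> Pow S"
    have f: "finite ({m} \<union> U)" using U assms(1) finite_subset by auto
    have M: "Max (insert m U) = m" using U assms(2) f by (intro Max_eqI) (auto simp: less_imp_le subset_iff)
    have "insert m U - {m} = U" using U assms(2) by auto
    then show "IrrQ r A ({m} \<union> U) * Runs G T U S = Qr r A dlt {m} U * Runs G T U S"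
      by (simp add: IrrQ_def M)
  qed
  also have "\<dots> = Qr r (Sel A G G) (Sel dlt G T) {m} S" by (rule CompG[OF assms(1)])
  also have "\<dots> = Qr r (Sel A G G) T {m} S"
    using assms by (intro Qr_cong) (auto simp: Sel_dlt finite_subset)
  finally show ?thesis .
qed

lemma TailC:
  assumes "finite S"
    and "\<And>I. I \<subseteq> S \<Longrightarrow> T I = (\<Sum>y\<in>I. P (I \<inter> {y<..}) * Q (I \<inter> {..y}))"
  shows "Qr g G T B S = (\<Sum>y\<in>S. Q (S \<inter> {..y}) * Qr g G P B (S \<inter> {y<..}))"
  using assms
proof (induction "card S" arbitrary: S B rule: less_induct)
  case less
  have fS: "finite S" by (rule less.prems(1))
  have IH: "Qr g G T (insert z B) (S \<inter> {..<z}) =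
     (\<Sum>y\<in>{y\<in>S. y < z}. Q (S \<inter> {..y}) * Qr g G P (insert z B) (S \<inter> {y<..} \<inter> {..<z}))"
    if z: "z \<in> S" for z
  proof -
    have "Qr g G T (insert z B) (S \<inter> {..<z}) =
      (\<Sum>y\<in>S \<inter> {..<z}. Q (S \<inter> {..<z} \<inter> {..y}) * Qr g G P (insert z B) (S \<inter> {..<z} \<inter> {y<..}))"
      using less.hyps[OF card_below_less[OF fS z]] fS less.prems(2) by auto
    also have "\<dots> = (\<Sum>y\<in>{y\<in>S. y < z}. Q (S \<inter> {..y}) * Qr g G P (insert z B) (S \<inter> {y<..} \<inter> {..<z}))"
    proof (rule sum.cong)
      show "S \<inter> {..<z} = {y\<in>S. y < z}" by auto
      fix y assume "y \<in> {y\<in>S. y < z}"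
      then have "S \<inter> {..<z} \<inter> {..y} = S \<inter> {..y}" "S \<inter> {..<z} \<inter> {y<..} = S \<inter> {y<..} \<inter> {..<z}" by auto
      then show "Q (S \<inter> {..<z} \<inter> {..y}) * Qr g G P (insert z B) (S \<inter> {..<z} \<inter> {y<..}) =
            Q (S \<inter> {..y}) * Qr g G P (insert z B) (S \<inter> {y<..} \<inter> {..<z})" by simp
    qed
    finally show ?thesis .
  qed
  have "Qr g G T B S = g B * T S + (\<Sum>z\<in>S. G (S \<inter> {z<..}) * Qr g G T (insert z B) (S \<inter> {..<z}))"
    by (rule Qr_rec[OF fS])
  also have "(\<Sum>z\<in>S. G (S \<inter> {z<..}) * Qr g G T (insert z B) (S \<inter> {..<z})) =
     (\<Sum>z\<in>S. \<Sum>y\<in>{y\<in>S. y < z}. Q (S \<inter> {..y}) * (G (S \<inter> {z<..}) * Qr g G P (insert z B) (S \<inter> {y<..} \<inter> {..<z})))"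
    using IH by (simp add: sum_distrib_left mult_ac)
  also have "\<dots> = (\<Sum>y\<in>S. \<Sum>z\<in>{z\<in>S. y < z}. Q (S \<inter> {..y}) * (G (S \<inter> {z<..}) * Qr g G P (insert z B) (S \<inter> {y<..} \<inter> {..<z})))"
    using fS by (rule sum.swap_restrict[OF _ fS])
  also have "T S = (\<Sum>y\<in>S. P (S \<inter> {y<..}) * Q (S \<inter> {..y}))" using less.prems(2) by simp
  finally have L: "Qr g G T B S = g B * (\<Sum>y\<in>S. P (S \<inter> {y<..}) * Q (S \<inter> {..y})) +
     (\<Sum>y\<in>S. \<Sum>z\<in>{z\<in>S. y < z}. Q (S \<inter> {..y}) * (G (S \<inter> {z<..}) * Qr g G P (insert z B) (S \<inter> {y<..} \<inter> {..<z})))" .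
  have R: "Q (S \<inter> {..y}) * Qr g G P B (S \<inter> {y<..}) = g B * (P (S \<inter> {y<..}) * Q (S \<inter> {..y})) +
      (\<Sum>z\<in>{z\<in>S. y < z}. Q (S \<inter> {..y}) * (G (S \<inter> {z<..}) * Qr g G P (insert z B) (S \<inter> {y<..} \<inter> {..<z})))"
    if y: "y \<in> S" for y
  proof -
    have "Qr g G P B (S \<inter> {y<..}) = g B * P (S \<inter> {y<..}) +
      (\<Sum>z\<in>S \<inter> {y<..}. G (S \<inter> {y<..} \<inter> {z<..}) * Qr g G P (insert z B) (S \<inter> {y<..} \<inter> {..<z}))"
      by (rule Qr_rec) (use fS in simp)
    also have "(\<Sum>z\<in>S \<inter> {y<..}. G (S \<inter> {y<..} \<inter> {z<..}) * Qr g G P (insert z B) (S \<inter> {y<..} \<inter> {..<z})) =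
       (\<Sum>z\<in>{z\<in>S. y < z}. G (S \<inter> {z<..}) * Qr g G P (insert z B) (S \<inter> {y<..} \<inter> {..<z}))"
    proof (rule sum.cong)
      show "S \<inter> {y<..} = {z\<in>S. y < z}" by auto
      fix z assume "z \<in> {z\<in>S. y < z}"
      then have "S \<inter> {y<..} \<inter> {z<..} = S \<inter> {z<..}" by auto
      then show "G (S \<inter> {y<..} \<inter> {z<..}) * Qr g G P (insert z B) (S \<inter> {y<..} \<inter> {..<z}) =
        G (S \<inter> {z<..}) * Qr g G P (insert z B) (S \<inter> {y<..} \<inter> {..<z})" by simp
    qed
    finally show ?thesis by (simp add: algebra_simps sum_distrib_left)
  qed
  have "(\<Sum>y\<in>S. Q (S \<inter> {..y}) * Qr g G P B (S \<inter> {y<..})) =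
     (\<Sum>y\<in>S. g B * (P (S \<inter> {y<..}) * Q (S \<inter> {..y})) +
      (\<Sum>z\<in>{z\<in>S. y < z}. Q (S \<inter> {..y}) * (G (S \<inter> {z<..}) * Qr g G P (insert z B) (S \<inter> {y<..} \<inter> {..<z}))))"
    by (rule sum.cong[OF refl]) (rule R)
  then show ?case unfolding L by (simp add: sum.distrib sum_distrib_left)
qed

lemma HeadC:
  assumes "finite S"
  shows "Qr g G T B S = T S * g B + (\<Sum>z\<in>S. T (S \<inter> {..<z}) * Qr g G dlt B (S \<inter> {z..}))"
  using assms
proof (induction "card S" arbitrary: S B rule: less_induct)
  case less
  have fS: "finite S" by (rule less.prems)
  have IH: "Qr g G T (insert z B) (S \<inter> {..<z}) = T (S \<inter> {..<z}) * g (insert z B) +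
     (\<Sum>w\<in>{w\<in>S. w < z}. T (S \<inter> {..<w}) * Qr g G dlt (insert z B) (S \<inter> {w..} \<inter> {..<z}))"
    if z: "z \<in> S" for z
  proof -
    have "Qr g G T (insert z B) (S \<inter> {..<z}) = T (S \<inter> {..<z}) * g (insert z B) +
      (\<Sum>w\<in>S \<inter> {..<z}. T (S \<inter> {..<z} \<inter> {..<w}) * Qr g G dlt (insert z B) (S \<inter> {..<z} \<inter> {w..}))"
      using less.hyps[OF card_below_less[OF fS z]] fS by auto
    also have "(\<Sum>w\<in>S \<inter> {..<z}. T (S \<inter> {..<z} \<inter> {..<w}) * Qr g G dlt (insert z B) (S \<inter> {..<z} \<inter> {w..})) =
       (\<Sum>w\<in>{w\<in>S. w < z}. T (S \<inter> {..<w}) * Qr g G dlt (insert z B) (S \<inter> {w..} \<inter> {..<z}))"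
    proof (rule sum.cong)
      show "S \<inter> {..<z} = {w\<in>S. w < z}" by auto
      fix w assume "w \<in> {w\<in>S. w < z}"
      then have "S \<inter> {..<z} \<inter> {..<w} = S \<inter> {..<w}" "S \<inter> {..<z} \<inter> {w..} = S \<inter> {w..} \<inter> {..<z}" by auto
      then show "T (S \<inter> {..<z} \<inter> {..<w}) * Qr g G dlt (insert z B) (S \<inter> {..<z} \<inter> {w..}) =
          T (S \<inter> {..<w}) * Qr g G dlt (insert z B) (S \<inter> {w..} \<inter> {..<z})" by simp
    qed
    finally show ?thesis .
  qed
  have R: "Qr g G dlt B (S \<inter> {w..}) = G (S \<inter> {w<..}) * g (insert w B) +
      (\<Sum>z\<in>{z\<in>S. w < z}. G (S \<inter> {z<..}) * Qr g G dlt (insert z B) (S \<inter> {w..} \<inter> {..<z}))"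
    if w: "w \<in> S" for w
  proof -
    have fw: "finite (S \<inter> {w..})" using fS by simp
    have ww: "w \<in> S \<inter> {w..}" using w by simp
    have "Qr g G dlt B (S \<inter> {w..}) = (\<Sum>z\<in>S \<inter> {w..}. G (S \<inter> {w..} \<inter> {z<..}) * Qr g G dlt (insert z B) (S \<inter> {w..} \<inter> {..<z}))"
    proof -
      have "dlt (S \<inter> {w..}) = 0" using ww by (auto simp: dlt_def)
      then show ?thesis by (simp add: Qr_rec[OF fw])
    qed
    also have "\<dots> = G (S \<inter> {w..} \<inter> {w<..}) * Qr g G dlt (insert w B) (S \<inter> {w..} \<inter> {..<w}) +
       (\<Sum>z\<in>(S \<inter> {w..}) - {w}. G (S \<inter> {w..} \<inter> {z<..}) * Qr g G dlt (insert z B) (S \<inter> {w..} \<inter> {..<z}))"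
      by (rule sum.remove[OF fw ww])
    also have "S \<inter> {w..} \<inter> {..<w} = {}" by auto
    also have "S \<inter> {w..} \<inter> {w<..} = S \<inter> {w<..}" by auto
    also have "(S \<inter> {w..}) - {w} = {z\<in>S. w < z}" by auto
    also have "(\<Sum>z\<in>{z\<in>S. w < z}. G (S \<inter> {w..} \<inter> {z<..}) * Qr g G dlt (insert z B) (S \<inter> {w..} \<inter> {..<z})) =
        (\<Sum>z\<in>{z\<in>S. w < z}. G (S \<inter> {z<..}) * Qr g G dlt (insert z B) (S \<inter> {w..} \<inter> {..<z}))"
      by (intro sum.cong refl) (auto intro!: arg_cong[where f=G])
    moreover have "dlt {} = 1" by (simp add: dlt_def)
    ultimately show ?thesis by (simp add: Qr_empty)
  qed
  have "Qr g G T B S = g B * T S + (\<Sum>z\<in>S. G (S \<inter> {z<..}) * Qr g G T (insert z B) (S \<inter> {..<z}))"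
    by (rule Qr_rec[OF fS])
  also have "(\<Sum>z\<in>S. G (S \<inter> {z<..}) * Qr g G T (insert z B) (S \<inter> {..<z})) =
     (\<Sum>z\<in>S. T (S \<inter> {..<z}) * (G (S \<inter> {z<..}) * g (insert z B))) +
     (\<Sum>z\<in>S. \<Sum>w\<in>{w\<in>S. w < z}. T (S \<inter> {..<w}) * (G (S \<inter> {z<..}) * Qr g G dlt (insert z B) (S \<inter> {w..} \<inter> {..<z})))"
    using IH by (simp add: distrib_left sum.distrib sum_distrib_left mult_ac)
  also have "(\<Sum>z\<in>S. \<Sum>w\<in>{w\<in>S. w < z}. T (S \<inter> {..<w}) * (G (S \<inter> {z<..}) * Qr g G dlt (insert z B) (S \<inter> {w..} \<inter> {..<z}))) =
     (\<Sum>w\<in>S. \<Sum>z\<in>{z\<in>S. w < z}. T (S \<inter> {..<w}) * (G (S \<inter> {z<..}) * Qr g G dlt (insert z B) (S \<inter> {w..} \<inter> {..<z})))"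
    by (rule sum.swap_restrict[OF fS fS])
  also have "(\<Sum>z\<in>S. T (S \<inter> {..<z}) * (G (S \<inter> {z<..}) * g (insert z B))) +
     (\<Sum>w\<in>S. \<Sum>z\<in>{z\<in>S. w < z}. T (S \<inter> {..<w}) * (G (S \<inter> {z<..}) * Qr g G dlt (insert z B) (S \<inter> {w..} \<inter> {..<z}))) =
     (\<Sum>w\<in>S. T (S \<inter> {..<w}) * Qr g G dlt B (S \<inter> {w..}))"
  proof -
    have "(\<Sum>w\<in>S. T (S \<inter> {..<w}) * Qr g G dlt B (S \<inter> {w..})) =
      (\<Sum>w\<in>S. T (S \<inter> {..<w}) * (G (S \<inter> {w<..}) * g (insert w B)) +
        (\<Sum>z\<in>{z\<in>S. w < z}. T (S \<inter> {..<w}) * (G (S \<inter> {z<..}) * Qr g G dlt (insert z B) (S \<inter> {w..} \<inter> {..<z}))))"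
      by (rule sum.cong[OF refl]) (simp add: R distrib_left sum_distrib_left)
    then show ?thesis by (simp add: sum.distrib)
  qed
  finally show ?case by (simp add: mult.commute)
qed


definition NCP :: "nat set \<Rightarrow> nat set set set" where
  "NCP S = {P. partition_on S P \<and> noncrossing P}"

definition wP :: "wt \<Rightarrow> wt \<Rightarrow> nat set set \<Rightarrow> complex" where
  "wP g1 g2 P = (\<Prod>V\<in>inner_blocks P. g1 V) * (\<Prod>V\<in>outer_blocks P. g2 V)"

definition NC3 :: "wt \<Rightarrow> wt \<Rightarrow> nat set \<Rightarrow> complex" where
  "NC3 g1 g2 S = (\<Sum>P\<in>NCP S. wP g1 g2 P)"

definition NCs :: "wt \<Rightarrow> nat set \<Rightarrow> complex" where
  "NCs g S = NC3 g g S"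

definition QP :: "nat set \<Rightarrow> nat set \<Rightarrow> nat set set set" where
  "QP B S = {P \<in> NCP (B \<union> S). \<exists>V\<in>P. B \<subseteq> V}"

lemma partition_on_iff: "partition_on A P \<longleftrightarrow> \<Union>P = A \<and> (\<forall>X\<in>P. \<forall>Y\<in>P. X \<noteq> Y \<longrightarrow> X \<inter> Y = {}) \<and> {} \<notin> P"
  by (auto simp: partition_on_def disjoint_def)

lemma NCP_finite: "finite S \<Longrightarrow> finite (NCP S)"
  by (rule finite_subset[OF _ finitely_many_partition_on[of S]]) (auto simp: NCP_def)

lemma NCP_P_finite: "finite S \<Longrightarrow> P \<in> NCP S \<Longrightarrow> finite P"
  by (auto simp: NCP_def intro: finite_elements)

lemma QP_sub: "QP B S \<subseteq> NCP (B \<union> S)"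
  by (auto simp: QP_def)

lemma inner_sub_B: "inner_blocks P \<subseteq> P"
  by (auto simp: inner_blocks_def)

lemma wP_same: "finite P \<Longrightarrow> wP g g P = (\<Prod>V\<in>P. g V)"
  unfolding wP_def outer_blocks_def
  using prod.subset_diff[OF inner_sub_B, of P g] by (simp add: mult.commute)

lemma NCs_alt: "finite S \<Longrightarrow> NCs g S = (\<Sum>P\<in>NCP S. \<Prod>V\<in>P. g V)"
  unfolding NCs_def NC3_def by (intro sum.cong refl wP_same NCP_P_finite)

lemma NCP_empty: "NCP {} = {{}}"
  by (auto simp: NCP_def partition_on_empty noncrossing_def)

lemma NC3_empty: "NC3 g1 g2 {} = 1"
  by (simp add: NC3_def NCP_empty wP_def inner_blocks_def outer_blocks_def)

lemma NCs_empty: "NCs g {} = 1"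
  by (simp add: NCs_def NC3_empty)

lemma noncrossing_subset:
  assumes "noncrossing P" "Q \<subseteq> P" shows "noncrossing Q"
  unfolding noncrossing_def
proof (intro ballI impI)
  fix V U assume h: "V \<in> Q" "U \<in> Q" "V \<noteq> U"
  have h2: "V \<in> P" "U \<in> P" using h assms(2) by auto
  have "\<forall>V\<in>P. \<forall>U\<in>P. V \<noteq> U \<longrightarrow> \<not> (\<exists>a b c d. a < b \<and> b < c \<and> c < d \<and> a \<in> V \<and> c \<in> V \<and> b \<in> U \<and> d \<in> U)"
    using assms(1) unfolding noncrossing_def .
  from this[rule_format, OF h2 h(3)]
  show "\<not> (\<exists>a b c d. a < b \<and> b < c \<and> c < d \<and> a \<in> V \<and> c \<in> V \<and> b \<in> U \<and> d \<in> U)" .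
qed

lemma noncrossingD:
  "noncrossing P \<Longrightarrow> V \<in> P \<Longrightarrow> U \<in> P \<Longrightarrow> V \<noteq> U \<Longrightarrow> a < b \<Longrightarrow> b < c \<Longrightarrow> c < d \<Longrightarrow>
   a \<in> V \<Longrightarrow> c \<in> V \<Longrightarrow> b \<in> U \<Longrightarrow> d \<in> U \<Longrightarrow> False"
proof -
  assume h: "noncrossing P" "V \<in> P" "U \<in> P" "V \<noteq> U" "a < b" "b < c" "c < d"
    "a \<in> V" "c \<in> V" "b \<in> U" "d \<in> U"
  have "\<forall>V\<in>P. \<forall>U\<in>P. V \<noteq> U \<longrightarrow> \<not> (\<exists>a b c d. a < b \<and> b < c \<and> c < d \<and> a \<in> V \<and> c \<in> V \<and> b \<in> U \<and> d \<in> U)"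
    using h(1) unfolding noncrossing_def .
  from this[rule_format, OF h(2,3,4)]
  have "\<not> (\<exists>a b c d. a < b \<and> b < c \<and> c < d \<and> a \<in> V \<and> c \<in> V \<and> b \<in> U \<and> d \<in> U)" .
  moreover have "\<exists>a b c d. a < b \<and> b < c \<and> c < d \<and> a \<in> V \<and> c \<in> V \<and> b \<in> U \<and> d \<in> U"
    using h(5-11) by (intro exI[of _ a] exI[of _ b] exI[of _ c] exI[of _ d]) simp
  ultimately show False by (rule notE)
qed

definition convex :: "nat set \<Rightarrow> bool" where
  "convex J \<longleftrightarrow> (\<forall>x z w. x \<in> J \<longrightarrow> z \<in> J \<longrightarrow> x < w \<longrightarrow> w < z \<longrightarrow> w \<in> J)"

lemma convexD: "convex J \<Longrightarrow> x \<in> J \<Longrightarrow> z \<in> J \<Longrightarrow> x < w \<Longrightarrow> w < z \<Longrightarrow> w \<in> J"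
  unfolding convex_def by (elim allE impE) auto

lemma NC_union_convex:
  assumes "noncrossing P1" "noncrossing P2" "convex J"
    and "\<And>X. X \<in> P1 \<Longrightarrow> X \<subseteq> J" "\<And>W. W \<in> P2 \<Longrightarrow> W \<inter> J = {}"
  shows "noncrossing (P1 \<union> P2)"
  unfolding noncrossing_def
proof (intro ballI impI notI)
  fix V U assume V: "V \<in> P1 \<union> P2" and U: "U \<in> P1 \<union> P2" and ne: "V \<noteq> U"
    and "\<exists>a b c d. a < b \<and> b < c \<and> c < d \<and> a \<in> V \<and> c \<in> V \<and> b \<in> U \<and> d \<in> U"
  then obtain a b c d where abcd: "a < b" "b < c" "c < d" "a \<in> V" "c \<in> V" "b \<in> U" "d \<in> U" by blast
  consider "V \<in> P1" "U \<in> P1" | "V \<in> P2" "U \<in> P2" | "V \<in> P1" "U \<in> P2" | "V \<in> P2" "U \<in> P1"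
    using V U by blast
  then show False
  proof cases
    case 1 then show ?thesis using noncrossingD[OF assms(1) _ _ ne abcd] by blast
  next
    case 2 then show ?thesis using noncrossingD[OF assms(2) _ _ ne abcd] by blast
  next
    case 3
    have "b \<in> J" using convexD[OF assms(3), of a c b] assms(4)[OF 3(1)] abcd by blast
    then show ?thesis using assms(5)[OF 3(2)] abcd by blast
  next
    case 4
    have "c \<in> J" using convexD[OF assms(3), of b d c] assms(4)[OF 4(2)] abcd by blast
    then show ?thesis using assms(5)[OF 4(1)] abcd by blast
  qed
qed

lemma inner_blocksI: "V \<in> P \<Longrightarrow> U \<in> P \<Longrightarrow> U \<noteq> V \<Longrightarrow> i < j \<Longrightarrow> j < k \<Longrightarrow> j \<in> V \<Longrightarrow> i \<in> U \<Longrightarrow> k \<in> U \<Longrightarrow> V \<in> inner_blocks P"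
  unfolding inner_blocks_def by blast

lemma inner_blocksE:
  assumes "V \<in> inner_blocks P"
  obtains U i j k where "V \<in> P" "U \<in> P" "U \<noteq> V" "i < j" "j < k" "j \<in> V" "i \<in> U" "k \<in> U"
  using assms unfolding inner_blocks_def by blast

lemma inner_union_convex:
  assumes "convex J" "\<And>X. X \<in> P1 \<Longrightarrow> X \<subseteq> J" "\<And>W. W \<in> P2 \<Longrightarrow> W \<inter> J = {}"
    and "\<And>X. X \<in> P1 \<Longrightarrow> X \<noteq> {}"
    and "V0 \<in> P2" "i0 \<in> V0" "k0 \<in> V0" "\<And>x. x \<in> J \<Longrightarrow> i0 < x \<and> x < k0"
  shows "inner_blocks (P1 \<union> P2) = P1 \<union> inner_blocks P2"
proof
  show "inner_blocks (P1 \<union> P2) \<subseteq> P1 \<union> inner_blocks P2"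
  proof
    fix V assume "V \<in> inner_blocks (P1 \<union> P2)"
    then obtain U i j k where h: "V \<in> P1 \<union> P2" "U \<in> P1 \<union> P2" "U \<noteq> V" "i < j" "j < k" "j \<in> V" "i \<in> U" "k \<in> U"
      by (rule inner_blocksE)
    show "V \<in> P1 \<union> inner_blocks P2"
    proof (cases "V \<in> P1")
      case True then show ?thesis by simp
    next
      case False
      then have VP2: "V \<in> P2" using h by blast
      show ?thesis
      proof (cases "U \<in> P1")
        case True
        have "j \<in> J" using convexD[OF assms(1), of i k j] assms(2)[OF True] h by blast
        then show ?thesis using assms(3)[OF VP2] h by blast
      next
        case False
        then have "U \<in> P2" using h by blast
        then show ?thesis using inner_blocksI[OF VP2 _ h(3-8)] by blast
      qed
    qed
  qed
  show "P1 \<union> inner_blocks P2 \<subseteq> inner_blocks (P1 \<union> P2)"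
  proof
    fix V assume V: "V \<in> P1 \<union> inner_blocks P2"
    show "V \<in> inner_blocks (P1 \<union> P2)"
    proof (cases "V \<in> P1")
      case True
      obtain x where x: "x \<in> V" using assms(4)[OF True] by blast
      have xJ: "x \<in> J" using assms(2)[OF True] x by blast
      have "V0 \<noteq> V" using assms(3)[OF assms(5)] xJ x by blast
      then show ?thesis using inner_blocksI[of V "P1 \<union> P2" V0 i0 x k0] True assms(5-7) assms(8)[OF xJ] x by blast
    next
      case False
      then have "V \<in> inner_blocks P2" using V by blast
      then obtain U i j k where h: "V \<in> P2" "U \<in> P2" "U \<noteq> V" "i < j" "j < k" "j \<in> V" "i \<in> U" "k \<in> U"
        by (rule inner_blocksE)
      then show ?thesis using inner_blocksI[of V "P1 \<union> P2" U i j k] by blast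
    qed
  qed
qed

lemma partition_onE:
  assumes "partition_on A P"
  shows "\<Union>P = A" "\<And>X Y. X \<in> P \<Longrightarrow> Y \<in> P \<Longrightarrow> X \<noteq> Y \<Longrightarrow> X \<inter> Y = {}" "\<And>X. X \<in> P \<Longrightarrow> X \<noteq> {}"
  using assms unfolding partition_on_iff by blast+

lemma partition_onI2:
  assumes "\<Union>P = A" "\<And>X Y. X \<in> P \<Longrightarrow> Y \<in> P \<Longrightarrow> X \<noteq> Y \<Longrightarrow> X \<inter> Y = {}" "\<And>X. X \<in> P \<Longrightarrow> X \<noteq> {}"
  shows "partition_on A P"
  using assms unfolding partition_on_iff by blast

lemma NCP_I: "partition_on S P \<Longrightarrow> noncrossing P \<Longrightarrow> P \<in> NCP S"
  by (simp add: NCP_def)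

lemma NCP_D: "P \<in> NCP S \<Longrightarrow> partition_on S P" "P \<in> NCP S \<Longrightarrow> noncrossing P"
  by (simp_all add: NCP_def)

lemma noncrossing_single: "noncrossing {B}"
  unfolding noncrossing_def by simp

lemma convex_lessThan: "convex {..<m}"
  unfolding convex_def by auto

lemma convex_between: "convex {y<..<m}"
  unfolding convex_def by auto

lemma inner_insert_top:
  assumes "\<And>X x b. X \<in> P' \<Longrightarrow> x \<in> X \<Longrightarrow> b \<in> B \<Longrightarrow> x < b" "B \<notin> P'"
  shows "inner_blocks (insert B P') = inner_blocks P'"
proof
  show "inner_blocks (insert B P') \<subseteq> inner_blocks P'"
  proof
    fix V assume "V \<in> inner_blocks (insert B P')"
    then obtain U i j k where h: "V \<in> insert B P'" "U \<in> insert B P'" "U \<noteq> V" "i < j" "j < k" "j \<in> V" "i \<in> U" "k \<in> U"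
      by (rule inner_blocksE)
    show "V \<in> inner_blocks P'"
    proof (cases "V = B")
      case True
      then have "U \<in> P'" using h by auto
      then have "k < j" using assms(1) h True by blast
      then show ?thesis using h by simp
    next
      case False
      then have VP: "V \<in> P'" using h by auto
      show ?thesis
      proof (cases "U = B")
        case True
        then have "j < i" using assms(1)[OF VP h(6)] h by blast
        then show ?thesis using h by simp
      next
        case False
        then have "U \<in> P'" using h by auto
        then show ?thesis using inner_blocksI[OF VP _ h(3-8)] by blast
      qed
    qed
  qed
  show "inner_blocks P' \<subseteq> inner_blocks (insert B P')"
  proof
    fix V assume "V \<in> inner_blocks P'"
    then obtain U i j k where h: "V \<in> P'" "U \<in> P'" "U \<noteq> V" "i < j" "j < k" "j \<in> V" "i \<in> U" "k \<in> U"
      by (rule inner_blocksE)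
    then show "V \<in> inner_blocks (insert B P')" using inner_blocksI[of V "insert B P'" U i j k] by blast
  qed
qed

locale qsetup =
  fixes B S :: "nat set"
  assumes fS: "finite S" and fB: "finite B" and Bne: "B \<noteq> {}"
    and lt: "\<And>s b. s \<in> S \<Longrightarrow> b \<in> B \<Longrightarrow> s < b"
begin

lemma BS_disj: "B \<inter> S = {}"
  using lt by fastforce

lemma minB: "Min B \<in> B"
  using fB Bne by simp

lemma A0_mem:
  assumes "P' \<in> NCP S"
  shows "insert B P' \<in> QP B S"
proof -
  have p: "partition_on S P'" and nc: "noncrossing P'" using NCP_D[OF assms] by auto
  have u: "\<Union>P' = S" using partition_onE(1)[OF p] .
  have d: "disjnt B (\<Union>P')" using u BS_disj by (simp add: disjnt_def)
  have "(B \<union> S) - B = S" using BS_disj by auto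
  then have "partition_on (B \<union> S) (insert B P')"
    using partition_on_insert[OF d] p Bne by auto
  moreover have "noncrossing (P' \<union> {B})"
  proof (rule NC_union_convex[OF nc noncrossing_single convex_lessThan[of "Min B"]])
    fix X assume "X \<in> P'"
    then have "X \<subseteq> S" using u by blast
    then show "X \<subseteq> {..<Min B}" using lt minB by auto
  next
    fix W assume "W \<in> {B}"
    then show "W \<inter> {..<Min B} = {}" using fB Min_le[OF fB] by (auto simp: not_less[symmetric])
  qed
  ultimately show ?thesis unfolding QP_def NCP_def by auto
qed

lemma B_notin: "P' \<in> NCP S \<Longrightarrow> B \<notin> P'"
proof
  assume "P' \<in> NCP S" "B \<in> P'"
  then have "B \<subseteq> S" using partition_onE(1)[OF NCP_D(1)] by blast
  then show False using BS_disj Bne by blast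
qed

lemma wP_A0:
  assumes "P' \<in> NCP S"
  shows "wP g1 g2 (insert B P') = g2 B * wP g1 g2 P'"
proof -
  have u: "\<Union>P' = S" using partition_onE(1)[OF NCP_D(1)[OF assms]] .
  have nB: "B \<notin> P'" using B_notin[OF assms] .
  have fP: "finite P'" using NCP_P_finite[OF fS assms] .
  have inn: "inner_blocks (insert B P') = inner_blocks P'"
    using u lt nB by (intro inner_insert_top) auto
  have "outer_blocks (insert B P') = insert B (outer_blocks P')"
    unfolding outer_blocks_def inn using nB inner_sub_B[of P'] by auto
  moreover have "B \<notin> outer_blocks P'" using nB by (simp add: outer_blocks_def)
  moreover have "finite (outer_blocks P')" using fP by (simp add: outer_blocks_def)
  ultimately show ?thesis unfolding wP_def inn by simp
qed

lemma Ay_facts: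
  assumes y: "y \<in> S" and P1: "P1 \<in> NCP (S \<inter> {y<..})" and P2: "P2 \<in> QP (insert y B) (S \<inter> {..<y})"
  shows "P1 \<union> P2 \<in> QP B S"
    and "wP g1 g2 (P1 \<union> P2) = (\<Prod>X\<in>P1. g1 X) * wP g1 g2 P2"
    and "\<And>X. X \<in> P1 \<Longrightarrow> X \<subseteq> S \<inter> {y<..}"
    and "\<And>W. W \<in> P2 \<Longrightarrow> W \<inter> (S \<inter> {y<..}) = {}"
proof -
  let ?J = "{y<..<Min B}"
  have p1: "partition_on (S \<inter> {y<..}) P1" and nc1: "noncrossing P1" using NCP_D[OF P1] by auto
  have P2': "P2 \<in> NCP (insert y B \<union> S \<inter> {..<y})" using P2 QP_sub by blast
  have p2: "partition_on (insert y B \<union> S \<inter> {..<y}) P2" and nc2: "noncrossing P2" using NCP_D[OF P2'] by auto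
  obtain V where V: "V \<in> P2" "insert y B \<subseteq> V" using P2 by (auto simp: QP_def)
  have u1: "\<Union>P1 = S \<inter> {y<..}" using partition_onE(1)[OF p1] .
  have u2: "\<Union>P2 = insert y B \<union> S \<inter> {..<y}" using partition_onE(1)[OF p2] .
  show X1: "\<And>X. X \<in> P1 \<Longrightarrow> X \<subseteq> S \<inter> {y<..}" using u1 by blast
  have XJ: "X \<subseteq> ?J" if "X \<in> P1" for X
  proof
    fix x assume "x \<in> X"
    then have "x \<in> S" "y < x" using X1[OF that] by auto
    then show "x \<in> ?J" using lt[OF _ minB] by auto
  qed
  have WJ: "W \<inter> ?J = {}" if "W \<in> P2" for W
  proof -
    have Wsub: "W \<subseteq> insert y B \<union> S \<inter> {..<y}" using u2 that by blast
    show ?thesis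
    proof (rule ccontr)
      assume "W \<inter> ?J \<noteq> {}"
      then obtain x where x: "x \<in> W" "y < x" "x < Min B" by auto
      have "x \<in> insert y B \<union> S \<inter> {..<y}" using Wsub x(1) by blast
      moreover have "x \<notin> B" using Min_le[OF fB] x(3) by (auto simp: not_less[symmetric])
      ultimately show False using x(2) by auto
    qed
  qed
  show W1: "\<And>W. W \<in> P2 \<Longrightarrow> W \<inter> (S \<inter> {y<..}) = {}"
  proof -
    fix W assume "W \<in> P2"
    then have "W \<subseteq> insert y B \<union> S \<inter> {..<y}" using u2 by blast
    then show "W \<inter> (S \<inter> {y<..}) = {}" using BS_disj by auto
  qed
  have ne1: "X \<noteq> {}" if "X \<in> P1" for X using partition_onE(3)[OF p1 that] .
  have ne2: "W \<noteq> {}" if "W \<in> P2" for W using partition_onE(3)[OF p2 that] .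
  have disj12: "X \<noteq> W" if "X \<in> P1" "W \<in> P2" for X W
    using XJ[OF that(1)] WJ[OF that(2)] ne1[OF that(1)] by blast
  have part: "partition_on (B \<union> S) (P1 \<union> P2)"
  proof (rule partition_onI2)
    show "\<Union>(P1 \<union> P2) = B \<union> S" using u1 u2 y by auto
    fix X Y assume XY: "X \<in> P1 \<union> P2" "Y \<in> P1 \<union> P2" "X \<noteq> Y"
    consider "X \<in> P1" "Y \<in> P1" | "X \<in> P2" "Y \<in> P2" | "X \<in> P1" "Y \<in> P2" | "X \<in> P2" "Y \<in> P1"
      using XY by blast
    then show "X \<inter> Y = {}"
    proof cases
      case 1 then show ?thesis using partition_onE(2)[OF p1] XY(3) by blast
    next
      case 2 then show ?thesis using partition_onE(2)[OF p2] XY(3) by blast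
    next
      case 3 then show ?thesis using XJ[OF 3(1)] WJ[OF 3(2)] by blast
    next
      case 4 then show ?thesis using XJ[OF 4(2)] WJ[OF 4(1)] by blast
    qed
  next
    fix X assume "X \<in> P1 \<union> P2" then show "X \<noteq> {}" using ne1 ne2 by blast
  qed
  have nc: "noncrossing (P1 \<union> P2)"
    by (rule NC_union_convex[OF nc1 nc2 convex_between XJ WJ])
  show "P1 \<union> P2 \<in> QP B S" unfolding QP_def NCP_def using part nc V by auto
  have yV: "y \<in> V" "Min B \<in> V" using V minB by auto
  have inn: "inner_blocks (P1 \<union> P2) = P1 \<union> inner_blocks P2"
    by (rule inner_union_convex[OF convex_between XJ WJ ne1 V(1) yV]) auto
  have fP1: "finite P1" using NCP_P_finite[OF _ P1] fS by simp
  have fP2: "finite P2" using NCP_P_finite[OF _ P2'] fS fB by simp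
  have d: "P1 \<inter> inner_blocks P2 = {}" using disj12 inner_sub_B by blast
  have out: "outer_blocks (P1 \<union> P2) = outer_blocks P2"
    unfolding outer_blocks_def inn using disj12 by auto
  have "(\<Prod>V\<in>P1 \<union> inner_blocks P2. g1 V) = (\<Prod>V\<in>P1. g1 V) * (\<Prod>V\<in>inner_blocks P2. g1 V)"
    by (rule prod.union_disjoint[OF fP1 finite_subset[OF inner_sub_B fP2] d])
  then show "wP g1 g2 (P1 \<union> P2) = (\<Prod>X\<in>P1. g1 X) * wP g1 g2 P2"
    unfolding wP_def inn out by (simp add: mult.assoc)
qed

lemma cover:
  assumes P: "P \<in> QP B S"
  shows "P \<in> insert B ` NCP S \<or> (\<exists>y\<in>S. \<exists>P1 P2. P1 \<in> NCP (S \<inter> {y<..}) \<and>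
           P2 \<in> QP (insert y B) (S \<inter> {..<y}) \<and> P = P1 \<union> P2)"
proof -
  have PN: "P \<in> NCP (B \<union> S)" using P QP_sub by blast
  have p: "partition_on (B \<union> S) P" and nc: "noncrossing P" using NCP_D[OF PN] by auto
  obtain V where V: "V \<in> P" "B \<subseteq> V" using P by (auto simp: QP_def)
  have u: "\<Union>P = B \<union> S" using partition_onE(1)[OF p] .
  have VBS: "V \<subseteq> B \<union> S" using V u by blast
  show ?thesis
  proof (cases "V = B")
    case True
    have d: "disjnt B (\<Union>(P - {B}))" using partition_onE(2)[OF p] V True by (auto simp: disjnt_def)
    have "partition_on (B \<union> S) (insert B (P - {B}))" using p V True by (simp add: insert_absorb)
    then have "partition_on ((B \<union> S) - B) (P - {B})" using partition_on_insert[OF d] by blast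
    moreover have "(B \<union> S) - B = S" using BS_disj by auto
    moreover have "noncrossing (P - {B})" using nc noncrossing_subset by blast
    ultimately have "P - {B} \<in> NCP S" by (simp add: NCP_def)
    moreover have "P = insert B (P - {B})" using V True by auto
    ultimately show ?thesis by blast
  next
    case False
    then have ne: "V \<inter> S \<noteq> {}" using V VBS by blast
    have fVS: "finite (V \<inter> S)" using fS by simp
    define y where "y = Max (V \<inter> S)"
    have yVS: "y \<in> V" "y \<in> S" using Max_in[OF fVS ne] y_def by auto
    have Vabove: "V \<inter> (S \<inter> {y<..}) = {}" using Max_ge[OF fVS] y_def by (auto simp: not_less[symmetric])
    define P1 where "P1 = {X\<in>P. X \<subseteq> S \<inter> {y<..}}"
    define P2 where "P2 = P - P1"
    have claim: "X \<subseteq> S \<inter> {y<..}" if X: "X \<in> P" "X \<noteq> V" "X \<inter> (S \<inter> {y<..}) \<noteq> {}" for X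
    proof
      fix x assume x: "x \<in> X"
      have XV: "X \<inter> V = {}" using partition_onE(2)[OF p X(1) V(1) X(2)] .
      have xS: "x \<in> S" using x XV V(2) X(1) u by blast
      obtain x' where x': "x' \<in> X" "x' \<in> S" "y < x'" using X(3) by blast
      have "y < x"
      proof (rule ccontr)
        assume "\<not> y < x"
        moreover have "x \<noteq> y" using x yVS(1) XV by blast
        ultimately have xy: "x < y" by simp
        have "x' < Min B" using lt[OF x'(2) minB] .
        then show False
          using noncrossingD[OF nc X(1) V(1) X(2) xy x'(3) _ x x'(1) yVS(1)] V(2) minB by blast
      qed
      then show "x \<in> S \<inter> {y<..}" using xS by simp
    qed
    have u1: "\<Union>P1 = S \<inter> {y<..}"
    proof
      show "\<Union>P1 \<subseteq> S \<inter> {y<..}" unfolding P1_def by blast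
      show "S \<inter> {y<..} \<subseteq> \<Union>P1"
      proof
        fix s assume s: "s \<in> S \<inter> {y<..}"
        then obtain X where X: "X \<in> P" "s \<in> X" using u by blast
        have "X \<noteq> V" using Vabove s X by blast
        then have "X \<subseteq> S \<inter> {y<..}" using claim X s by blast
        then show "s \<in> \<Union>P1" using X unfolding P1_def by blast
      qed
    qed
    have p1: "partition_on (S \<inter> {y<..}) P1"
      by (rule partition_onI2[OF u1]) (use partition_onE(2,3)[OF p] in \<open>auto simp: P1_def\<close>)
    have P1N: "P1 \<in> NCP (S \<inter> {y<..})"
      using p1 noncrossing_subset[OF nc] by (auto simp: NCP_def P1_def)
    have W2: "W \<inter> (S \<inter> {y<..}) = {}" if W: "W \<in> P2" for W
    proof (rule ccontr)
      assume a: "W \<inter> (S \<inter> {y<..}) \<noteq> {}"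
      have WP: "W \<in> P" "W \<notin> P1" using W by (auto simp: P2_def)
      show False
      proof (cases "W = V")
        case True then show False using a Vabove by simp
      next
        case False then show False using claim[OF WP(1) False a] WP by (auto simp: P1_def)
      qed
    qed
    have u2: "\<Union>P2 = insert y B \<union> S \<inter> {..<y}"
    proof
      show "\<Union>P2 \<subseteq> insert y B \<union> S \<inter> {..<y}"
      proof
        fix e assume "e \<in> \<Union>P2"
        then obtain W where W: "W \<in> P2" "e \<in> W" by blast
        have "e \<in> B \<union> S" using W u by (auto simp: P2_def)
        moreover have "e \<notin> S \<inter> {y<..}" using W2[OF W(1)] W(2) by blast
        ultimately show "e \<in> insert y B \<union> S \<inter> {..<y}" by auto
      qed
      show "insert y B \<union> S \<inter> {..<y} \<subseteq> \<Union>P2"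
      proof
        fix e assume e: "e \<in> insert y B \<union> S \<inter> {..<y}"
        then have "e \<in> B \<union> S" using yVS by auto
        then obtain W where W: "W \<in> P" "e \<in> W" using u by blast
        have "e \<notin> S \<inter> {y<..}" using e BS_disj by auto
        then have "W \<notin> P1" using W by (auto simp: P1_def)
        then show "e \<in> \<Union>P2" using W by (auto simp: P2_def)
      qed
    qed
    have p2: "partition_on (insert y B \<union> S \<inter> {..<y}) P2"
      by (rule partition_onI2[OF u2]) (use partition_onE(2,3)[OF p] in \<open>auto simp: P2_def\<close>)
    have VP2: "V \<in> P2"
    proof -
      have "\<not> V \<subseteq> S \<inter> {y<..}" using V(2) Bne BS_disj by blast
      then show ?thesis using V(1) by (auto simp: P2_def P1_def)
    qed
    have "insert y B \<subseteq> V" using yVS V by auto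
    then have P2Q: "P2 \<in> QP (insert y B) (S \<inter> {..<y})"
      using p2 noncrossing_subset[OF nc] VP2 by (auto simp: QP_def NCP_def P2_def)
    have "P = P1 \<union> P2" by (auto simp: P1_def P2_def)
    then show ?thesis using yVS(2) P1N P2Q by blast
  qed
qed

lemma QP_block_unique:
  assumes "P \<in> QP B S" "V \<in> P" "W \<in> P" "B \<subseteq> V" "B \<subseteq> W"
  shows "V = W"
proof (rule ccontr)
  assume "V \<noteq> W"
  have "P \<in> NCP (B \<union> S)" using assms(1) QP_sub by blast
  then have "V \<inter> W = {}" using partition_onE(2)[OF NCP_D(1)] assms(2,3) \<open>V \<noteq> W\<close> by blast
  then show False using assms(4,5) Bne by blast
qed

lemma QP_ne: "P \<in> QP B' S' \<Longrightarrow> X \<in> P \<Longrightarrow> X \<noteq> {}"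
  using QP_sub partition_onE(3)[OF NCP_D(1)] by blast

lemma QP_sum_step:
  assumes IH: "\<And>y. y \<in> S \<Longrightarrow> (\<Sum>P\<in>QP (insert y B) (S \<inter> {..<y}). wP g1 g2 P) =
      Qr g2 (NCs g1) (NC3 g1 g2) (insert y B) (S \<inter> {..<y})"
  shows "(\<Sum>P\<in>QP B S. wP g1 g2 P) = Qr g2 (NCs g1) (NC3 g1 g2) B S"
proof -
  let ?h = "\<lambda>p. fst p \<union> snd p"
  define A0 where "A0 = insert B ` NCP S"
  define Ay where "Ay y = ?h ` (NCP (S \<inter> {y<..}) \<times> QP (insert y B) (S \<inter> {..<y}))" for y
  have eq: "QP B S = A0 \<union> (\<Union>y\<in>S. Ay y)"
  proof
    show "QP B S \<subseteq> A0 \<union> (\<Union>y\<in>S. Ay y)"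
    proof
      fix P assume P: "P \<in> QP B S"
      show "P \<in> A0 \<union> (\<Union>y\<in>S. Ay y)"
      proof (cases "P \<in> A0")
        case True then show ?thesis by simp
      next
        case False
        then obtain y P1 P2 where "y \<in> S" "P1 \<in> NCP (S \<inter> {y<..})" "P2 \<in> QP (insert y B) (S \<inter> {..<y})" "P = P1 \<union> P2"
          using cover[OF P] A0_def by blast
        then have "P \<in> Ay y" unfolding Ay_def by (intro image_eqI[of _ _ "(P1, P2)"]) auto
        then show ?thesis using \<open>y \<in> S\<close> by blast
      qed
    qed
    show "A0 \<union> (\<Union>y\<in>S. Ay y) \<subseteq> QP B S"
      using A0_mem Ay_facts(1) by (auto simp: A0_def Ay_def)
  qed
  have finQ: "finite (QP B' S')" if "finite S'" "finite B'" for B' S'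
    using finite_subset[OF QP_sub NCP_finite] that by blast
  have fA0: "finite A0" unfolding A0_def using NCP_finite[OF fS] by simp
  have fAy: "finite (Ay y)" if "y \<in> S" for y
    unfolding Ay_def using NCP_finite fS fB finQ by simp
  have d0: "A0 \<inter> (\<Union>y\<in>S. Ay y) = {}"
  proof (rule ccontr)
    assume "A0 \<inter> (\<Union>y\<in>S. Ay y) \<noteq> {}"
    then obtain P y where P: "P \<in> A0" "y \<in> S" "P \<in> Ay y" by blast
    then have y: "y \<in> S" by simp
    obtain P' where P': "P' \<in> NCP S" "P = insert B P'" using P(1) unfolding A0_def by blast
    obtain P1 P2 where P12: "P1 \<in> NCP (S \<inter> {y<..})" "P2 \<in> QP (insert y B) (S \<inter> {..<y})" "P = P1 \<union> P2"
      using P(3) unfolding Ay_def by auto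
    obtain V where V: "V \<in> P2" "insert y B \<subseteq> V" using P12(2) by (auto simp: QP_def)
    have PQ: "P \<in> QP B S" using A0_mem[OF P'(1)] P'(2) by simp
    have "V = B" using QP_block_unique[OF PQ, of V B] V P12(3) P'(2) by auto
    then show False using V(2) y BS_disj by blast
  qed
  have dy: "Ay y \<inter> Ay z = {}" if yz: "y \<in> S" "z \<in> S" "y \<noteq> z" for y z
  proof (rule ccontr)
    assume "Ay y \<inter> Ay z \<noteq> {}"
    then obtain P where P: "P \<in> Ay y" "P \<in> Ay z" by blast
    obtain P1 P2 where P12: "P1 \<in> NCP (S \<inter> {y<..})" "P2 \<in> QP (insert y B) (S \<inter> {..<y})" "P = P1 \<union> P2"
      using P(1) unfolding Ay_def by auto
    obtain P1' P2' where P12': "P1' \<in> NCP (S \<inter> {z<..})" "P2' \<in> QP (insert z B) (S \<inter> {..<z})" "P = P1' \<union> P2'"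
      using P(2) unfolding Ay_def by auto
    obtain V where V: "V \<in> P2" "insert y B \<subseteq> V" using P12(2) by (auto simp: QP_def)
    obtain V' where V': "V' \<in> P2'" "insert z B \<subseteq> V'" using P12'(2) by (auto simp: QP_def)
    have PQ: "P \<in> QP B S" using Ay_facts(1)[OF yz(1) P12(1,2)] P12(3) by simp
    have "V = V'" using QP_block_unique[OF PQ, of V V'] V V' P12(3) P12'(3) by auto
    then have yz': "y \<in> V" "z \<in> V" using V V' by auto
    consider "y < z" | "z < y" using yz(3) by linarith
    then show False
    proof cases
      case 1 then show False using Ay_facts(4)[OF yz(1) P12(1,2) V(1)] yz' yz by blast
    next
      case 2 then show False using Ay_facts(4)[OF yz(2) P12'(1,2) V'(1)] yz' yz \<open>V = V'\<close> by blast
    qed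
  qed
  have "(\<Sum>P\<in>QP B S. wP g1 g2 P) = (\<Sum>P\<in>A0. wP g1 g2 P) + (\<Sum>P\<in>(\<Union>y\<in>S. Ay y). wP g1 g2 P)"
    unfolding eq by (rule sum.union_disjoint) (use fA0 fAy fS d0 in auto)
  also have "(\<Sum>P\<in>(\<Union>y\<in>S. Ay y). wP g1 g2 P) = (\<Sum>y\<in>S. \<Sum>P\<in>Ay y. wP g1 g2 P)"
    by (rule sum.UNION_disjoint) (use fS fAy dy in auto)
  also have "(\<Sum>P\<in>A0. wP g1 g2 P) = g2 B * NC3 g1 g2 S"
  proof -
    have inj: "inj_on (insert B) (NCP S)"
      by (rule inj_onI) (metis B_notin insert_ident)
    have "(\<Sum>P\<in>A0. wP g1 g2 P) = (\<Sum>P'\<in>NCP S. wP g1 g2 (insert B P'))"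
      unfolding A0_def by (rule sum.reindex[OF inj, unfolded comp_def])
    also have "\<dots> = (\<Sum>P'\<in>NCP S. g2 B * wP g1 g2 P')" by (intro sum.cong refl wP_A0)
    finally show ?thesis by (simp add: NC3_def sum_distrib_left)
  qed
  also have "(\<Sum>y\<in>S. \<Sum>P\<in>Ay y. wP g1 g2 P) =
     (\<Sum>y\<in>S. NCs g1 (S \<inter> {y<..}) * Qr g2 (NCs g1) (NC3 g1 g2) (insert y B) (S \<inter> {..<y}))"
  proof (rule sum.cong[OF refl])
    fix y assume y: "y \<in> S"
    have inj: "inj_on ?h (NCP (S \<inter> {y<..}) \<times> QP (insert y B) (S \<inter> {..<y}))"
    proof (rule inj_onI)
      fix p q assume p: "p \<in> NCP (S \<inter> {y<..}) \<times> QP (insert y B) (S \<inter> {..<y})"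
        and q: "q \<in> NCP (S \<inter> {y<..}) \<times> QP (insert y B) (S \<inter> {..<y})" and e: "?h p = ?h q"
      have c: "fst r = {X \<in> ?h r. X \<subseteq> S \<inter> {y<..}}" "snd r = ?h r - fst r"
        if r: "r \<in> NCP (S \<inter> {y<..}) \<times> QP (insert y B) (S \<inter> {..<y})" for r
      proof -
        have r1: "fst r \<in> NCP (S \<inter> {y<..})" and r2: "snd r \<in> QP (insert y B) (S \<inter> {..<y})" using r by auto
        have a: "X \<subseteq> S \<inter> {y<..}" if "X \<in> fst r" for X using Ay_facts(3)[OF y r1 r2 that] .
        have b: "\<not> W \<subseteq> S \<inter> {y<..}" if "W \<in> snd r" for W
          using Ay_facts(4)[OF y r1 r2 that] QP_ne[OF r2 that] by blast
        show "fst r = {X \<in> ?h r. X \<subseteq> S \<inter> {y<..}}" using a b by auto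
        have "fst r \<inter> snd r = {}" using a b by blast
        then show "snd r = ?h r - fst r" by blast
      qed
      have "fst p = fst q" using c[OF p] c[OF q] e by simp
      moreover have "snd p = snd q" using c[OF p] c[OF q] e \<open>fst p = fst q\<close> by simp
      ultimately show "p = q" by (simp add: prod_eq_iff)
    qed
    have "(\<Sum>P\<in>Ay y. wP g1 g2 P) = (\<Sum>p\<in>NCP (S \<inter> {y<..}) \<times> QP (insert y B) (S \<inter> {..<y}). wP g1 g2 (?h p))"
      unfolding Ay_def by (rule sum.reindex[OF inj, unfolded comp_def])
    also have "\<dots> = (\<Sum>p\<in>NCP (S \<inter> {y<..}) \<times> QP (insert y B) (S \<inter> {..<y}). (\<Prod>X\<in>fst p. g1 X) * wP g1 g2 (snd p))"
      by (intro sum.cong refl) (auto intro: Ay_facts(2)[OF y])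
    also have "\<dots> = (\<Sum>P1\<in>NCP (S \<inter> {y<..}). \<Sum>P2\<in>QP (insert y B) (S \<inter> {..<y}). (\<Prod>X\<in>P1. g1 X) * wP g1 g2 P2)"
      by (simp add: sum.cartesian_product split_beta)
    also have "\<dots> = NCs g1 (S \<inter> {y<..}) * (\<Sum>P2\<in>QP (insert y B) (S \<inter> {..<y}). wP g1 g2 P2)"
      using fS by (simp add: NCs_alt sum_product)
    finally show "(\<Sum>P\<in>Ay y. wP g1 g2 P) = NCs g1 (S \<inter> {y<..}) * Qr g2 (NCs g1) (NC3 g1 g2) (insert y B) (S \<inter> {..<y})"
      using IH[OF y] by simp
  qed
  finally show ?thesis by (simp add: Qr_rec[OF fS])
qed

end


lemma QP_sum:
  assumes "finite S" "finite B" "B \<noteq> {}" "\<And>s b. s \<in> S \<Longrightarrow> b \<in> B \<Longrightarrow> s < b"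
  shows "(\<Sum>P\<in>QP B S. wP g1 g2 P) = Qr g2 (NCs g1) (NC3 g1 g2) B S"
  using assms
proof (induction "card S" arbitrary: S B rule: less_induct)
  case less
  interpret qsetup B S by (rule qsetup.intro) (use less.prems in auto)
  show ?case
  proof (rule QP_sum_step)
    fix y assume y: "y \<in> S"
    show "(\<Sum>P\<in>QP (insert y B) (S \<inter> {..<y}). wP g1 g2 P) = Qr g2 (NCs g1) (NC3 g1 g2) (insert y B) (S \<inter> {..<y})"
    proof (rule less.hyps)
      show "card (S \<inter> {..<y}) < card S" using card_below_less[OF less.prems(1) y] .
      show "finite (S \<inter> {..<y})" using less.prems(1) by simp
      show "finite (insert y B)" using less.prems(2) by simp
      show "insert y B \<noteq> {}" by simp
      fix s b assume "s \<in> S \<inter> {..<y}" "b \<in> insert y B"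
      then show "s < b" using less.prems(4)[of s b] by auto
    qed
  qed
qed

lemma Decomp:
  assumes "finite S" "S \<noteq> {}"
  shows "NC3 g1 g2 S = Qr g2 (NCs g1) (NC3 g1 g2) {Max S} (S - {Max S})"
proof -
  have M: "Max S \<in> S" using Max_in[OF assms] .
  have e: "{Max S} \<union> (S - {Max S}) = S" using M by auto
  have "QP {Max S} (S - {Max S}) = NCP S"
  proof
    show "QP {Max S} (S - {Max S}) \<subseteq> NCP S" using QP_sub e by metis
    show "NCP S \<subseteq> QP {Max S} (S - {Max S})"
    proof
      fix P assume P: "P \<in> NCP S"
      then have "Max S \<in> \<Union>P" using partition_onE(1)[OF NCP_D(1)[OF P]] M by simp
      then obtain V where "V \<in> P" "Max S \<in> V" by blast
      then show "P \<in> QP {Max S} (S - {Max S})" using P e unfolding QP_def by auto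
    qed
  qed
  then have "NC3 g1 g2 S = (\<Sum>P\<in>QP {Max S} (S - {Max S}). wP g1 g2 P)" by (simp add: NC3_def)
  also have "\<dots> = Qr g2 (NCs g1) (NC3 g1 g2) {Max S} (S - {Max S})"
    using assms Max_ge[OF assms(1)] by (intro QP_sum) (auto simp: le_less)
  finally show ?thesis .
qed

lemma NCs_Decomp:
  assumes "finite S" "S \<noteq> {}"
  shows "NCs g S = Qr g (NCs g) (NCs g) {Max S} (S - {Max S})"
proof -
  have e: "NC3 g g = NCs g" by (rule ext) (simp add: NCs_def)
  show ?thesis using Decomp[OF assms, of g g] unfolding e by (simp add: e)
qed


lemma pow_max_split:
  fixes H :: "nat set"
  assumes "finite H"
  shows "(\<Sum>W\<in>Pow H. f W) = f {} + (\<Sum>y\<in>H. \<Sum>W'\<in>Pow (H \<inter> {..<y}). f (insert y W'))"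
proof -
  let ?A = "\<lambda>y. insert y ` Pow (H \<inter> {..<y})"
  have eq: "Pow H - {{}} = (\<Union>y\<in>H. ?A y)"
  proof
    show "Pow H - {{}} \<subseteq> (\<Union>y\<in>H. ?A y)"
    proof
      fix W assume W: "W \<in> Pow H - {{}}"
      then have fW: "finite W" "W \<noteq> {}" using assms finite_subset by auto
      have M: "Max W \<in> W" "Max W \<in> H" using Max_in[OF fW] W by auto
      have "W = insert (Max W) (W - {Max W})" using M by auto
      moreover have "W - {Max W} \<in> Pow (H \<inter> {..<Max W})"
        using W Max_ge[OF fW(1)] by (auto simp: le_less)
      ultimately show "W \<in> (\<Union>y\<in>H. ?A y)" using M by blast
    qed
    show "(\<Union>y\<in>H. ?A y) \<subseteq> Pow H - {{}}" by auto
  qed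
  have fin: "finite (?A y)" for y using assms by simp
  have disj: "?A y \<inter> ?A z = {}" if "y \<in> H" "z \<in> H" "y \<noteq> z" for y z
  proof (rule ccontr)
    assume "?A y \<inter> ?A z \<noteq> {}"
    then obtain U V where U: "U \<in> Pow (H \<inter> {..<y})" and V: "V \<in> Pow (H \<inter> {..<z})" and e: "insert y U = insert z V"
      by blast
    have "z \<in> insert y U" "y \<in> insert z V" using e by auto
    then have "z < y" "y < z" using U V that(3) by auto
    then show False by simp
  qed
  have inj: "inj_on (insert y) (Pow (H \<inter> {..<y}))" for y
    by (rule inj_onI) (metis Int_iff PowD insert_ident lessThan_iff order_less_irrefl subset_iff)
  have "(\<Sum>W\<in>Pow H. f W) = f {} + (\<Sum>W\<in>Pow H - {{}}. f W)"
    using assms by (intro sum.remove) auto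
  also have "(\<Sum>W\<in>Pow H - {{}}. f W) = (\<Sum>y\<in>H. \<Sum>W\<in>?A y. f W)"
    unfolding eq by (rule sum.UNION_disjoint) (use assms fin disj in auto)
  also have "\<dots> = (\<Sum>y\<in>H. \<Sum>W'\<in>Pow (H \<inter> {..<y}). f (insert y W'))"
    by (rule sum.cong[OF refl], rule sum.reindex[OF inj, unfolded comp_def])
  finally show ?thesis .
qed

locale P4ctx =
  fixes r :: wt and t :: complex
begin

abbreviation "s \<equiv> 1 + t"
abbreviation "A1 \<equiv> NCs r"
abbreviation "As \<equiv> NCs (\<lambda>V. s * r V)"
abbreviation "b \<equiv> IrrQ r (NCs r)"
abbreviation "X \<equiv> NCs (\<lambda>V. t * b V)"
abbreviation "Y \<equiv> Sel (NCs r) X X"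
definition Z :: "nat set \<Rightarrow> complex" where "Z K = Qr r As As {Max K} (K - {Max K})"

lemma F1: "finite K \<Longrightarrow> K \<noteq> {} \<Longrightarrow> As K = s * Z K"
  unfolding Z_def by (simp add: NCs_Decomp Qr_scale)

lemma below_max: "finite H \<Longrightarrow> x \<in> H - {Max H} \<Longrightarrow> x < Max H"
  using Max_ge[of H x] by (auto simp: le_less)

lemma F2: "finite H \<Longrightarrow> H \<noteq> {} \<Longrightarrow> X H = t * Qr r Y X {Max H} (H - {Max H})"
proof -
  assume a: "finite H" "H \<noteq> {}"
  have "X H = Qr (\<lambda>V. t * b V) X X {Max H} (H - {Max H})" by (rule NCs_Decomp[OF a])
  also have "\<dots> = t * Qr b X X {Max H} (H - {Max H})" using a by (simp add: Qr_scale)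
  also have "Qr b X X {Max H} (H - {Max H}) = Qr r Y X {Max H} (H - {Max H})"
    using a below_max by (intro Comp) auto
  finally show ?thesis .
qed

lemma F3: "finite H \<Longrightarrow> Y H = X H + (\<Sum>y\<in>H. X (H \<inter> {y<..}) * Qr r Y Y {y} (H \<inter> {..<y}))"
proof -
  assume fH: "finite H"
  have "Y H = A1 {} * Runs X X {} H + (\<Sum>y\<in>H. \<Sum>W'\<in>Pow (H \<inter> {..<y}). A1 (insert y W') * Runs X X (insert y W') H)"
    unfolding Sel_def by (rule pow_max_split[OF fH])
  also have "A1 {} * Runs X X {} H = X H" by (simp add: NCs_empty Runs_empty)
  also have "(\<Sum>y\<in>H. \<Sum>W'\<in>Pow (H \<inter> {..<y}). A1 (insert y W') * Runs X X (insert y W') H) =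
      (\<Sum>y\<in>H. X (H \<inter> {y<..}) * Qr r Y Y {y} (H \<inter> {..<y}))"
  proof (rule sum.cong[OF refl])
    fix y assume y: "y \<in> H"
    have "(\<Sum>W'\<in>Pow (H \<inter> {..<y}). A1 (insert y W') * Runs X X (insert y W') H) =
        (\<Sum>W'\<in>Pow (H \<inter> {..<y}). X (H \<inter> {y<..}) * (Qr r A1 A1 {y} W' * Runs X X W' (H \<inter> {..<y})))"
    proof (rule sum.cong[OF refl])
      fix W' assume W': "W' \<in> Pow (H \<inter> {..<y})"
      have fW: "finite (insert y W')" using W' fH finite_subset by auto
      have M: "Max (insert y W') = y" using W' fW by (intro Max_eqI) auto
      have D: "insert y W' - {y} = W'" using W' by auto
      have "A1 (insert y W') = Qr r A1 A1 {y} W'" using NCs_Decomp[OF fW] M D by simp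
      moreover have "Runs X X (insert y W') H = X (H \<inter> {y<..}) * Runs X X W' (H \<inter> {..<y})"
        using Runs_max[OF fW] M D by simp
      ultimately show "A1 (insert y W') * Runs X X (insert y W') H =
          X (H \<inter> {y<..}) * (Qr r A1 A1 {y} W' * Runs X X W' (H \<inter> {..<y}))" by simp
    qed
    also have "\<dots> = X (H \<inter> {y<..}) * (\<Sum>W'\<in>Pow (H \<inter> {..<y}). Qr r A1 A1 {y} W' * Runs X X W' (H \<inter> {..<y}))"
      by (rule sum_distrib_left[symmetric])
    also have "(\<Sum>W'\<in>Pow (H \<inter> {..<y}). Qr r A1 A1 {y} W' * Runs X X W' (H \<inter> {..<y})) = Qr r Y Y {y} (H \<inter> {..<y})"
      using CompG[of "H \<inter> {..<y}" r A1 A1 "{y}" X X] fH by simp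
    finally show "(\<Sum>W'\<in>Pow (H \<inter> {..<y}). A1 (insert y W') * Runs X X (insert y W') H) =
        X (H \<inter> {y<..}) * Qr r Y Y {y} (H \<inter> {..<y})" .
  qed
  finally show ?thesis .
qed

lemma J: "finite H \<Longrightarrow> Y H = As H"
proof (induction "card H" arbitrary: H rule: less_induct)
  case less
  have fH: "finite H" by (rule less.prems)
  have IHs: "Y K = As K" if "K \<subseteq> H" "K \<noteq> H" for K
  proof -
    have "K \<subset> H" using that by blast
    then have "card K < card H" using psubset_card_mono[OF fH] by blast
    then show ?thesis using less.hyps finite_subset[OF that(1) fH] by blast
  qed
  show ?case
  proof (cases "H = {}")
    case True then show ?thesis using F3[of "{}"] by (simp add: NCs_empty)
  next
    case False
    define M where "M = Max H"
    define H' where "H' = H - {M}"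
    have MH: "M \<in> H" using Max_in[OF fH False] M_def by simp
    have fH': "finite H'" using fH H'_def by simp
    have H'lt: "x < M" if "x \<in> H'" for x using below_max[OF fH] that M_def H'_def by simp
    have QZ: "Qr r Y Y {y} (K \<inter> {..<y}) = Z (K \<inter> {..y})" if K: "K \<subseteq> H" "y \<in> K" for K y
    proof -
      have fK: "finite (K \<inter> {..y})" using fH K(1) finite_subset by auto
      have neK: "K \<inter> {..y} \<noteq> {}" using K(2) by auto
      have Mx: "Max (K \<inter> {..y}) = y" using K(2) fK by (intro Max_eqI) auto
      have D: "K \<inter> {..y} - {y} = K \<inter> {..<y}" by auto
      have "Qr r Y Y {y} (K \<inter> {..<y}) = Qr r As As {y} (K \<inter> {..<y})"
      proof (rule Qr_cong)
        show "finite (K \<inter> {..<y})" using fH K(1) finite_subset by auto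
        fix W assume W: "W \<subseteq> K \<inter> {..<y}"
        have "W \<subseteq> H" "W \<noteq> H" using W K by auto
        then show "Y W = As W" "Y W = As W" using IHs by auto
      qed simp
      then show ?thesis unfolding Z_def Mx D .
    qed
    have XK: "X K = t * Qr r As X {Max K} (K - {Max K})" if K: "K \<subseteq> H" "K \<noteq> {}" for K
    proof -
      have fK: "finite K" using fH K(1) finite_subset by auto
      have "Qr r Y X {Max K} (K - {Max K}) = Qr r As X {Max K} (K - {Max K})"
      proof (rule Qr_cong)
        show "finite (K - {Max K})" using fK by simp
        fix W assume W: "W \<subseteq> K - {Max K}"
        have "Max K \<in> K" using Max_in[OF fK K(2)] .
        then have "W \<subseteq> H" "W \<noteq> H" using W K by auto
        then show "Y W = As W" using IHs by auto
      qed simp_all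
      then show ?thesis using F2[OF fK K(2)] by simp
    qed
    have tail: "As I - X I = (\<Sum>y\<in>I. X (I \<inter> {y<..}) * Z (I \<inter> {..y}))" if I: "I \<subseteq> H'" for I
    proof -
      have IH: "I \<subseteq> H" "I \<noteq> H" using I MH H'_def by auto
      have fI: "finite I" using IH fH finite_subset by auto
      have "As I = Y I" using IHs[OF IH] by simp
      also have "\<dots> = X I + (\<Sum>y\<in>I. X (I \<inter> {y<..}) * Qr r Y Y {y} (I \<inter> {..<y}))" by (rule F3[OF fI])
      also have "(\<Sum>y\<in>I. X (I \<inter> {y<..}) * Qr r Y Y {y} (I \<inter> {..<y})) = (\<Sum>y\<in>I. X (I \<inter> {y<..}) * Z (I \<inter> {..y}))"
        using QZ IH(1) by (intro sum.cong refl) auto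
      finally show ?thesis by simp
    qed
    have TC: "Qr r As (\<lambda>I. As I - X I) {M} H' = (\<Sum>y\<in>H'. Z (H' \<inter> {..y}) * Qr r As X {M} (H' \<inter> {y<..}))"
      by (rule TailC[OF fH']) (rule tail)
    have "Y H = X H + (\<Sum>y\<in>H. X (H \<inter> {y<..}) * Qr r Y Y {y} (H \<inter> {..<y}))" by (rule F3[OF fH])
    also have "(\<Sum>y\<in>H. X (H \<inter> {y<..}) * Qr r Y Y {y} (H \<inter> {..<y})) = (\<Sum>y\<in>H. X (H \<inter> {y<..}) * Z (H \<inter> {..y}))"
      using QZ by (intro sum.cong refl) auto
    also have "\<dots> = X (H \<inter> {M<..}) * Z (H \<inter> {..M}) + (\<Sum>y\<in>H'. X (H \<inter> {y<..}) * Z (H \<inter> {..y}))"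
      unfolding H'_def by (rule sum.remove[OF fH MH])
    also have "H \<inter> {M<..} = {}" using Max_ge[OF fH] M_def by (auto simp: not_less[symmetric])
    also have "H \<inter> {..M} = H" using Max_ge[OF fH] M_def by auto
    also have "(\<Sum>y\<in>H'. X (H \<inter> {y<..}) * Z (H \<inter> {..y})) = t * (\<Sum>y\<in>H'. Z (H' \<inter> {..y}) * Qr r As X {M} (H' \<inter> {y<..}))"
    proof -
      have "X (H \<inter> {y<..}) * Z (H \<inter> {..y}) = t * (Z (H' \<inter> {..y}) * Qr r As X {M} (H' \<inter> {y<..}))" if y: "y \<in> H'" for y
      proof -
        have K: "H \<inter> {y<..} \<subseteq> H" "H \<inter> {y<..} \<noteq> {}" using MH H'lt[OF y] by auto
        have fK: "finite (H \<inter> {y<..})" using fH by simp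
        have Mx: "Max (H \<inter> {y<..}) = M" using MH H'lt[OF y] fK Max_ge[OF fH] M_def by (intro Max_eqI) auto
        have D: "H \<inter> {y<..} - {M} = H' \<inter> {y<..}" using H'_def by auto
        have "H \<inter> {..y} = H' \<inter> {..y}" using H'lt[OF y] H'_def by auto
        then show ?thesis using XK[OF K] Mx D by simp
      qed
      then show ?thesis by (simp add: sum_distrib_left)
    qed
    also have "(\<Sum>y\<in>H'. Z (H' \<inter> {..y}) * Qr r As X {M} (H' \<inter> {y<..})) = Qr r As As {M} H' - Qr r As X {M} H'"
      using TC Qr_diff[OF fH', of r As As X "{M}"] by simp
    also have "X H = t * Qr r As X {M} H'" using XK[of H] False M_def H'_def by simp
    also have "Qr r As As {M} H' = Z H" unfolding Z_def M_def H'_def ..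
    finally have "Y H = (1 + t) * Z H" by (simp add: NCs_empty algebra_simps)
    then show ?thesis using F1[OF fH False] by simp
  qed
qed

lemma P4set: "finite H \<Longrightarrow> NC3 (\<lambda>V. t * b V) (\<lambda>V. s * b V) H = As H"
proof (induction "card H" arbitrary: H rule: less_induct)
  case less
  have fH: "finite H" by (rule less.prems)
  show ?case
  proof (cases "H = {}")
    case True then show ?thesis by (simp add: NC3_empty NCs_empty)
  next
    case False
    define M where "M = Max H"
    define H' where "H' = H - {M}"
    have MH: "M \<in> H" using Max_in[OF fH False] M_def by simp
    have fH': "finite H'" using fH H'_def by simp
    let ?Phi = "NC3 (\<lambda>V. t * b V) (\<lambda>V. s * b V)"
    have "?Phi H = Qr (\<lambda>V. s * b V) X ?Phi {M} H'"
      unfolding M_def H'_def by (rule Decomp[OF fH False])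
    also have "\<dots> = s * Qr b X ?Phi {M} H'" using fH' by (simp add: Qr_scale)
    also have "Qr b X ?Phi {M} H' = Qr r Y ?Phi {M} H'"
      using fH' below_max[OF fH] M_def H'_def by (intro Comp) auto
    also have "\<dots> = Qr r As As {M} H'"
    proof (rule Qr_cong[OF fH'])
      fix W assume W: "W \<subseteq> H'"
      have fW: "finite W" using W fH' finite_subset by auto
      show "Y W = As W" by (rule J[OF fW])
      have "W \<subset> H" using W MH H'_def by auto
      then have "card W < card H" using psubset_card_mono[OF fH] by blast
      then show "?Phi W = As W" using less.hyps fW by blast
    qed simp
    also have "Qr r As As {M} H' = Z H" unfolding Z_def M_def H'_def ..
    finally show ?thesis using F1[OF fH False] by simp
  qed
qed

end


lemma NC3_IP: "NC3 g1 g2 {..<n} = (\<Sum>P\<in>interval_partitions n. \<Prod>V\<in>P. IrrQ g2 (NCs g1) V)"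
proof (induction n rule: less_induct)
  case (less n)
  show ?case
  proof (cases n)
    case 0 then show ?thesis by (simp add: NC3_empty IP_zero)
  next
    case (Suc m)
    let ?C = "IrrQ g2 (NCs g1)"
    have Mx: "Max {..<n} = m" using Suc by (intro Max_eqI) auto
    have D: "{..<n} - {m} = {..<m}" using Suc by auto
    have "NC3 g1 g2 {..<n} = Qr g2 (NCs g1) (NC3 g1 g2) {m} {..<m}"
    proof -
      have ne: "{..<n} \<noteq> {}" using Suc by auto
      show ?thesis using Decomp[OF finite_lessThan ne, of g1 g2] Mx D by simp
    qed
    also have "\<dots> = NC3 g1 g2 {..<m} * g2 {m} + (\<Sum>z\<in>{..<m}. NC3 g1 g2 ({..<m} \<inter> {..<z}) * Qr g2 (NCs g1) dlt {m} ({..<m} \<inter> {z..}))"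
      by (rule HeadC) simp
    also have "\<dots> = (\<Sum>j<n. (\<Sum>P\<in>interval_partitions j. \<Prod>V\<in>P. ?C V) * ?C {j..<n})"
    proof -
      have c: "?C {j..<n} = Qr g2 (NCs g1) dlt {m} {j..<m}" if "j < n" for j
      proof -
        have "Max {j..<n} = m" using that Suc by (intro Max_eqI) auto
        moreover have "{j..<n} - {m} = {j..<m}" using Suc by auto
        ultimately show ?thesis by (simp add: IrrQ_def)
      qed
      have cm: "?C {m..<n} = g2 {m}" using c[of m] Suc by (simp add: Qr_empty dlt_def)
      have IH: "(\<Sum>P\<in>interval_partitions j. \<Prod>V\<in>P. ?C V) = NC3 g1 g2 {..<j}" if "j < n" for j
        using less.IH[OF that] by simp
      have "(\<Sum>j<n. (\<Sum>P\<in>interval_partitions j. \<Prod>V\<in>P. ?C V) * ?C {j..<n}) =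
          (\<Sum>j<m. (\<Sum>P\<in>interval_partitions j. \<Prod>V\<in>P. ?C V) * ?C {j..<n}) +
          (\<Sum>P\<in>interval_partitions m. \<Prod>V\<in>P. ?C V) * ?C {m..<n}"
        using Suc by simp
      also have "(\<Sum>j<m. (\<Sum>P\<in>interval_partitions j. \<Prod>V\<in>P. ?C V) * ?C {j..<n}) =
          (\<Sum>j<m. NC3 g1 g2 {..<j} * Qr g2 (NCs g1) dlt {m} {j..<m})"
        using Suc by (intro sum.cong refl) (simp add: IH[unfolded Suc] c[unfolded Suc])
      also have "(\<Sum>P\<in>interval_partitions m. \<Prod>V\<in>P. ?C V) * ?C {m..<n} = NC3 g1 g2 {..<m} * g2 {m}"
        using Suc IH[of m] cm by simp
      finally have "(\<Sum>j<n. (\<Sum>P\<in>interval_partitions j. \<Prod>V\<in>P. ?C V) * ?C {j..<n}) =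
          (\<Sum>j<m. NC3 g1 g2 {..<j} * Qr g2 (NCs g1) dlt {m} {j..<m}) + NC3 g1 g2 {..<m} * g2 {m}" .
      moreover have "(\<Sum>z\<in>{..<m}. NC3 g1 g2 ({..<m} \<inter> {..<z}) * Qr g2 (NCs g1) dlt {m} ({..<m} \<inter> {z..})) =
          (\<Sum>j<m. NC3 g1 g2 {..<j} * Qr g2 (NCs g1) dlt {m} {j..<m})"
      proof (intro sum.cong refl)
        fix z assume "z \<in> {..<m}"
        then have "{..<m} \<inter> {..<z} = {..<z}" "{..<m} \<inter> {z..} = {z..<m}" by auto
        then show "NC3 g1 g2 ({..<m} \<inter> {..<z}) * Qr g2 (NCs g1) dlt {m} ({..<m} \<inter> {z..}) =
            NC3 g1 g2 {..<z} * Qr g2 (NCs g1) dlt {m} {z..<m}" by simp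
      qed
      ultimately show ?thesis by simp
    qed
    also have "\<dots> = (\<Sum>P\<in>interval_partitions n. \<Prod>V\<in>P. ?C V)"
      using Suc by (intro IP_rec[symmetric]) simp
    finally show ?thesis .
  qed
qed

definition smo :: "nat set \<Rightarrow> (nat \<Rightarrow> nat) \<Rightarrow> bool" where
  "smo D e \<longleftrightarrow> (\<forall>x\<in>D. \<forall>y\<in>D. x < y \<longrightarrow> e x < e y)"

lemma smoD: "smo D e \<Longrightarrow> x \<in> D \<Longrightarrow> y \<in> D \<Longrightarrow> x < y \<Longrightarrow> e x < e y"
  unfolding smo_def by blast

lemma smo_less_iff: "smo D e \<Longrightarrow> x \<in> D \<Longrightarrow> y \<in> D \<Longrightarrow> e x < e y \<longleftrightarrow> x < y"
  using smoD[of D e x y] smoD[of D e y x] by (cases x y rule: linorder_cases) auto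

lemma smo_inj: "smo D e \<Longrightarrow> inj_on e D"
  by (rule inj_onI) (metis smo_less_iff less_irrefl linorder_cases)

lemma smo_above: "smo D e \<Longrightarrow> S \<subseteq> D \<Longrightarrow> y \<in> D \<Longrightarrow> e ` (S \<inter> {y<..}) = e ` S \<inter> {e y<..}"
  using smo_less_iff[of D e] by auto

lemma smo_below: "smo D e \<Longrightarrow> S \<subseteq> D \<Longrightarrow> y \<in> D \<Longrightarrow> e ` (S \<inter> {..<y}) = e ` S \<inter> {..<e y}"
  using smo_less_iff[of D e] by auto

lemma smo_Max: "smo D e \<Longrightarrow> S \<subseteq> D \<Longrightarrow> finite S \<Longrightarrow> S \<noteq> {} \<Longrightarrow> Max (e ` S) = e (Max S)"
proof -
  assume a: "smo D e" "S \<subseteq> D" "finite S" "S \<noteq> {}"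
  have M: "Max S \<in> S" using Max_in[OF a(3,4)] .
  show ?thesis
  proof (rule Max_eqI)
    show "finite (e ` S)" using a by simp
    show "e (Max S) \<in> e ` S" using M by simp
    fix z assume "z \<in> e ` S"
    then obtain x where x: "x \<in> S" "z = e x" by blast
    have "x \<le> Max S" using Max_ge[OF a(3) x(1)] .
    then show "z \<le> e (Max S)" using x smo_less_iff[OF a(1), of x "Max S"] a(2) M by (auto simp: le_less)
  qed
qed

lemma Qr_relabel:
  assumes "smo D e" "finite S" "B \<union> S \<subseteq> D"
    and "\<And>X. X \<subseteq> D \<Longrightarrow> g X = g' (e ` X)" "\<And>X. X \<subseteq> S \<Longrightarrow> G X = G' (e ` X)"
    and "\<And>X. X \<subseteq> S \<Longrightarrow> T X = T' (e ` X)"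
  shows "Qr g G T B S = Qr g' G' T' (e ` B) (e ` S)"
  using assms(2,3,5,6)
proof (induction "card S" arbitrary: S B rule: less_induct)
  case less
  have fS: "finite S" by (rule less.prems(1))
  have inj: "inj_on e S" using smo_inj[OF assms(1)] less.prems(2) inj_on_subset by blast
  have "Qr g G T B S = g B * T S + (\<Sum>y\<in>S. G (S \<inter> {y<..}) * Qr g G T (insert y B) (S \<inter> {..<y}))"
    by (rule Qr_rec[OF fS])
  also have "\<dots> = g' (e ` B) * T' (e ` S) + (\<Sum>y\<in>S. G' (e ` S \<inter> {e y<..}) * Qr g' G' T' (insert (e y) (e ` B)) (e ` S \<inter> {..<e y}))"
  proof -
    have "G (S \<inter> {y<..}) * Qr g G T (insert y B) (S \<inter> {..<y}) =
        G' (e ` S \<inter> {e y<..}) * Qr g' G' T' (insert (e y) (e ` B)) (e ` S \<inter> {..<e y})" if y: "y \<in> S" for y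
    proof -
      have yD: "y \<in> D" using y less.prems(2) by blast
      have SD: "S \<subseteq> D" using less.prems(2) by blast
      have "G (S \<inter> {y<..}) = G' (e ` (S \<inter> {y<..}))" using less.prems(3) by blast
      also have "e ` (S \<inter> {y<..}) = e ` S \<inter> {e y<..}" by (rule smo_above[OF assms(1) SD yD])
      finally have 1: "G (S \<inter> {y<..}) = G' (e ` S \<inter> {e y<..})" .
      have "Qr g G T (insert y B) (S \<inter> {..<y}) = Qr g' G' T' (e ` insert y B) (e ` (S \<inter> {..<y}))"
        by (rule less.hyps[OF card_below_less[OF fS y]]) (use fS less.prems(2,3,4) y in auto)
      also have "e ` (S \<inter> {..<y}) = e ` S \<inter> {..<e y}" by (rule smo_below[OF assms(1) SD yD])
      finally show ?thesis using 1 by simp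
    qed
    moreover have "g B = g' (e ` B)" "T S = T' (e ` S)" using assms(4) less.prems(2,4) by auto
    ultimately show ?thesis by simp
  qed
  also have "(\<Sum>y\<in>S. G' (e ` S \<inter> {e y<..}) * Qr g' G' T' (insert (e y) (e ` B)) (e ` S \<inter> {..<e y})) =
      (\<Sum>y'\<in>e ` S. G' (e ` S \<inter> {y'<..}) * Qr g' G' T' (insert y' (e ` B)) (e ` S \<inter> {..<y'}))"
    by (rule sum.reindex[OF inj, unfolded comp_def, symmetric])
  also have "g' (e ` B) * T' (e ` S) + \<dots> = Qr g' G' T' (e ` B) (e ` S)"
    by (rule Qr_rec[symmetric]) (use fS in simp)
  finally show ?case .
qed


lemma NCs_relabel:
  assumes "smo D e" "finite S" "S \<subseteq> D" "\<And>X. X \<subseteq> D \<Longrightarrow> g X = g' (e ` X)"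
  shows "NCs g S = NCs g' (e ` S)"
  using assms(2,3)
proof (induction "card S" arbitrary: S rule: less_induct)
  case less
  show ?case
  proof (cases "S = {}")
    case True then show ?thesis by (simp add: NCs_empty)
  next
    case False
    have fS: "finite S" by (rule less.prems(1))
    define M where "M = Max S"
    have MS: "M \<in> S" using Max_in[OF fS False] M_def by simp
    have inj: "inj_on e D" by (rule smo_inj[OF assms(1)])
    have eM: "Max (e ` S) = e M" using smo_Max[OF assms(1) less.prems(2) fS False] M_def by simp
    have eD: "e ` (S - {M}) = e ` S - {e M}"
      using inj less.prems(2) MS by (auto simp: inj_on_def)
    have "NCs g S = Qr g (NCs g) (NCs g) {M} (S - {M})" unfolding M_def by (rule NCs_Decomp[OF fS False])
    also have "\<dots> = Qr g' (NCs g') (NCs g') (e ` {M}) (e ` (S - {M}))"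
    proof (rule Qr_relabel[OF assms(1)])
      show "finite (S - {M})" using fS by simp
      show "{M} \<union> (S - {M}) \<subseteq> D" using MS less.prems(2) by auto
      show "g X = g' (e ` X)" if "X \<subseteq> D" for X using assms(4) that .
      fix X assume X: "X \<subseteq> S - {M}"
      have "X \<subset> S" using X MS by auto
      then have "card X < card S" using psubset_card_mono[OF fS] by blast
      moreover have "finite X" using X fS by (meson Diff_subset finite_subset)
      moreover have "X \<subseteq> D" using X less.prems(2) by auto
      ultimately show "NCs g X = NCs g' (e ` X)" "NCs g X = NCs g' (e ` X)" using less.hyps by auto
    qed
    also have "\<dots> = NCs g' (e ` S)"
    proof -
      have f: "finite (e ` S)" "e ` S \<noteq> {}" using fS False by auto
      show ?thesis using NCs_Decomp[OF f, of g'] eM eD by simp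
    qed
    finally show ?thesis .
  qed
qed

lemma dlt_image: "dlt (e ` X) = dlt X"
  by (simp add: dlt_def)

lemma IrrQ_relabel:
  assumes "smo D e" "finite K" "K \<subseteq> D" "K \<noteq> {}"
    and "\<And>X. X \<subseteq> D \<Longrightarrow> g X = g' (e ` X)" "\<And>X. X \<subseteq> D \<Longrightarrow> g2 X = g2' (e ` X)"
  shows "IrrQ g (NCs g2) K = IrrQ g' (NCs g2') (e ` K)"
proof -
  define M where "M = Max K"
  have MK: "M \<in> K" using Max_in[OF assms(2,4)] M_def by simp
  have inj: "inj_on e D" by (rule smo_inj[OF assms(1)])
  have eM: "Max (e ` K) = e M" using smo_Max[OF assms(1,3,2,4)] M_def by simp
  have eD: "e ` (K - {M}) = e ` K - {e M}"
    using inj assms(3) MK by (auto simp: inj_on_def)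
  have "IrrQ g (NCs g2) K = Qr g (NCs g2) dlt {M} (K - {M})" by (simp add: IrrQ_def M_def)
  also have "\<dots> = Qr g' (NCs g2') dlt (e ` {M}) (e ` (K - {M}))"
  proof (rule Qr_relabel[OF assms(1)])
    show "finite (K - {M})" using assms(2) by simp
    show "{M} \<union> (K - {M}) \<subseteq> D" using MK assms(3) by auto
    show "g X = g' (e ` X)" if "X \<subseteq> D" for X using assms(5) that .
    fix X assume X: "X \<subseteq> K - {M}"
    have "finite X" using X assms(2) by (meson Diff_subset finite_subset)
    moreover have "X \<subseteq> D" using X assms(3) by auto
    ultimately show "NCs g2 X = NCs g2' (e ` X)" using NCs_relabel[OF assms(1)] assms(6) by blast
    show "dlt X = dlt (e ` X)" by (simp add: dlt_image)
  qed
  also have "\<dots> = IrrQ g' (NCs g2') (e ` K)" by (simp add: IrrQ_def eM eD)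
  finally show ?thesis .
qed

definition rk :: "nat set \<Rightarrow> nat \<Rightarrow> nat" where
  "rk V i = card {j\<in>V. j < i}"

lemma rk_smo: "finite V \<Longrightarrow> smo V (rk V)"
  unfolding smo_def rk_def
proof (intro ballI impI)
  fix x y assume a: "finite V" "x \<in> V" "y \<in> V" "x < y"
  have "{j\<in>V. j < x} \<subset> {j\<in>V. j < y}" using a by auto
  then show "card {j\<in>V. j < x} < card {j\<in>V. j < y}" using a(1) by (intro psubset_card_mono) auto
qed

lemma rk_image: "finite V \<Longrightarrow> rk V ` V = {..<card V}"
proof -
  assume fV: "finite V"
  have sub: "rk V ` V \<subseteq> {..<card V}"
  proof
    fix z assume "z \<in> rk V ` V"
    then obtain i where i: "i \<in> V" "z = rk V i" by blast
    have "{j\<in>V. j < i} \<subset> V" using i by auto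
    then show "z \<in> {..<card V}" using i fV psubset_card_mono by (auto simp: rk_def)
  qed
  have "card (rk V ` V) = card V" using card_image[OF smo_inj[OF rk_smo[OF fV]]] .
  then show ?thesis using card_subset_eq[OF finite_lessThan sub] by simp
qed

lemma nths_rk: "W \<subseteq> V \<Longrightarrow> finite V \<Longrightarrow> nths (nths xs V) (rk V ` W) = nths xs W"
proof -
  assume a: "W \<subseteq> V" "finite V"
  have inj: "inj_on (rk V) V" using smo_inj[OF rk_smo[OF a(2)]] .
  have "{i \<in> V. \<exists>j\<in>rk V ` W. card {i' \<in> V. i' < i} = j} = W"
  proof
    show "{i \<in> V. \<exists>j\<in>rk V ` W. card {i' \<in> V. i' < i} = j} \<subseteq> W"
    proof
      fix i assume "i \<in> {i \<in> V. \<exists>j\<in>rk V ` W. card {i' \<in> V. i' < i} = j}"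
      then obtain w where i: "i \<in> V" "w \<in> W" "rk V i = rk V w" unfolding rk_def by auto
      then have "i = w" using inj a(1) by (auto simp: inj_on_def)
      then show "i \<in> W" using i by simp
    qed
    show "W \<subseteq> {i \<in> V. \<exists>j\<in>rk V ` W. card {i' \<in> V. i' < i} = j}"
      using a(1) unfolding rk_def by auto
  qed
  then show ?thesis by (simp add: nths_nths)
qed

lemma Irr_list_relabel:
  assumes "finite V" "V \<noteq> {}"
  shows "IrrQ (\<lambda>W. F1 (nths xs W)) (NCs (\<lambda>W. F2 (nths xs W))) V =
         IrrQ (\<lambda>W. F1 (nths (nths xs V) W)) (NCs (\<lambda>W. F2 (nths (nths xs V) W))) {..<card V}"
proof -
  have "IrrQ (\<lambda>W. F1 (nths xs W)) (NCs (\<lambda>W. F2 (nths xs W))) V =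
        IrrQ (\<lambda>W. F1 (nths (nths xs V) W)) (NCs (\<lambda>W. F2 (nths (nths xs V) W))) (rk V ` V)"
    by (rule IrrQ_relabel[OF rk_smo[OF assms(1)] assms(1) subset_refl assms(2)])
       (simp_all add: nths_rk assms(1))
  then show ?thesis using rk_image[OF assms(1)] by simp
qed


lemma NCP_NC: "NCP {..<n} = NC n"
  by (simp add: NCP_def NC_def)

lemma NC3_cong:
  assumes "finite S" "\<And>V. V \<subseteq> S \<Longrightarrow> V \<noteq> {} \<Longrightarrow> g1 V = g1' V" "\<And>V. V \<subseteq> S \<Longrightarrow> V \<noteq> {} \<Longrightarrow> g2 V = g2' V"
  shows "NC3 g1 g2 S = NC3 g1' g2' S"
  unfolding NC3_def wP_def
proof (intro sum.cong refl arg_cong2[where f="(*)"] prod.cong)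
  fix P V assume P: "P \<in> NCP S"
  have p: "partition_on S P" using NCP_D(1)[OF P] .
  { assume "V \<in> inner_blocks P"
    then have "V \<in> P" using inner_sub_B by blast
    then show "g1 V = g1' V" using assms(2) partition_onE(1,3)[OF p] by blast }
  { assume "V \<in> outer_blocks P"
    then have "V \<in> P" by (simp add: outer_blocks_def)
    then show "g2 V = g2' V" using assms(3) partition_onE(1,3)[OF p] by blast }
qed

definition IrrLg :: "('a list \<Rightarrow> complex) \<Rightarrow> ('a list \<Rightarrow> complex) \<Rightarrow> 'a list \<Rightarrow> complex" where
  "IrrLg Fb Fg es = IrrQ (\<lambda>W. Fb (nths es W)) (NCs (\<lambda>W. Fg (nths es W))) {..<length es}"

lemma IrrLg_relabel:
  assumes "V \<subseteq> {..<length xs}" "V \<noteq> {}"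
  shows "IrrQ (\<lambda>W. Fb (nths xs W)) (NCs (\<lambda>W. Fg (nths xs W))) V = IrrLg Fb Fg (nths xs V)"
proof -
  have fV: "finite V" using assms(1) finite_subset by blast
  have "length (nths xs V) = card V" by (rule length_nths_sub[OF assms(1)])
  then show ?thesis unfolding IrrLg_def using Irr_list_relabel[OF fV assms(2), of Fb xs Fg] by simp
qed

lemma NC3_list:
  "NC3 (\<lambda>W. Fg (nths xs W)) (\<lambda>W. Fb (nths xs W)) {..<length xs} =
   (\<Sum>P\<in>interval_partitions (length xs). \<Prod>V\<in>P. IrrLg Fb Fg (nths xs V))"
  unfolding NC3_IP
proof (intro sum.cong refl prod.cong)
  fix P V assume P: "P \<in> interval_partitions (length xs)" and V: "V \<in> P"
  have p: "partition_on {..<length xs} P" using IP_part[OF P] .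
  have 1: "V \<subseteq> {..<length xs}" using partition_onE(1)[OF p] V by blast
  have 2: "V \<noteq> {}" using partition_onE(3)[OF p V] .
  show "IrrQ (\<lambda>W. Fb (nths xs W)) (NCs (\<lambda>W. Fg (nths xs W))) V = IrrLg Fb Fg (nths xs V)"
    using IrrLg_relabel[OF 1 2, of Fb Fg] .
qed

lemma bool_cum_jd: "bool_cum (joint_distr M fs) w = bool_cum M (map (\<lambda>i. fs ! i) w)"
proof (cases "w = []")
  case True then show ?thesis using bool_cum_char by (metis list.simps(8))
next
  case False
  show ?thesis
  proof (rule bool_cum_local[where A = UNIV, OF _ False])
    fix bs :: "nat list" assume "bs \<noteq> []"
    then have "map (\<lambda>i. fs ! i) bs \<noteq> []" by simp
    then show "joint_distr M fs bs = (\<Sum>P\<in>interval_partitions (length bs). \<Prod>V\<in>P. bool_cum M (map (\<lambda>i. fs ! i) (nths bs V)))"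
      using bool_cum_char[of M] by (simp add: joint_distr_def nths_map)
  qed simp
qed

lemma free_cum_jd: "free_cum (joint_distr M fs) w = free_cum M (map (\<lambda>i. fs ! i) w)"
proof (cases "w = []")
  case True then show ?thesis using free_cum_char by (metis list.simps(8))
next
  case False
  show ?thesis
  proof (rule free_cum_local[where A = UNIV, OF _ False])
    fix bs :: "nat list" assume "bs \<noteq> []"
    then have "map (\<lambda>i. fs ! i) bs \<noteq> []" by simp
    then show "joint_distr M fs bs = (\<Sum>P\<in>NC (length bs). \<Prod>V\<in>P. free_cum M (map (\<lambda>i. fs ! i) (nths bs V)))"
      using free_cum_char[of M] by (simp add: joint_distr_def nths_map)
  qed simp
qed

lemma bool_cum_bool_pow: "bool_cum (bool_pow c M) w = of_real c * bool_cum M w"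
proof (cases "w = []")
  case True then show ?thesis using bool_cum_char by (metis mult_zero_right)
next
  case False
  show ?thesis
  proof (rule bool_cum_local[where A = UNIV, OF _ False])
    show "w \<in> lists UNIV" by simp
    fix bs :: "nat list"
    show "bool_pow c M bs = (\<Sum>P\<in>interval_partitions (length bs). \<Prod>V\<in>P. of_real c * bool_cum M (nths bs V))"
      unfolding bool_pow_def by (rule refl)
  qed
qed


lemma IrrLg_scale: "IrrLg (\<lambda>l. c * F l) G es = c * IrrLg F G es"
  unfolding IrrLg_def IrrQ_def by (rule Qr_scale) simp

context sps
begin

abbreviation "mphi \<equiv> (\<lambda>as. phi (prod_list as))"

lemma Bp_Irr:
  assumes "es \<in> lists {f. phi f = 0}" "es \<noteq> []"
  shows "Bp es = IrrLg (free_cum mphi) (free_cum mphi) es"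
proof -
  have "bool_cum mphi es = IrrLg (free_cum mphi) (free_cum mphi) es"
  proof (rule bool_cum_local[where A = "{f. phi f = 0}", OF assms])
    fix ds assume ds: "ds \<in> lists {f. phi f = 0}" "ds \<noteq> []"
    have "mphi ds = (\<Sum>P\<in>NC (length ds). \<Prod>V\<in>P. free_cum mphi (nths ds V))"
      using free_cum_char[of mphi] ds(2) by blast
    also have "\<dots> = NC3 (\<lambda>W. free_cum mphi (nths ds W)) (\<lambda>W. free_cum mphi (nths ds W)) {..<length ds}"
      using NCs_alt[of "{..<length ds}" "\<lambda>W. free_cum mphi (nths ds W)"] by (simp add: NCs_def NCP_NC)
    also have "\<dots> = (\<Sum>P\<in>interval_partitions (length ds). \<Prod>V\<in>P. IrrLg (free_cum mphi) (free_cum mphi) (nths ds V))"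
      by (rule NC3_list)
    finally show "mphi ds = (\<Sum>P\<in>interval_partitions (length ds). \<Prod>V\<in>P. IrrLg (free_cum mphi) (free_cum mphi) (nths ds V))" .
  qed
  then show ?thesis using bool_cum_mphi[OF assms] by simp
qed

lemma b_eq:
  assumes "cs \<in> lists {f. phi f = 0}" "V \<subseteq> {..<length cs}" "V \<noteq> {}"
  shows "Bp (nths cs V) = IrrQ (\<lambda>W. free_cum mphi (nths cs W)) (NCs (\<lambda>W. free_cum mphi (nths cs W))) V"
proof -
  have "Bp (nths cs V) = IrrLg (free_cum mphi) (free_cum mphi) (nths cs V)"
    using Bp_Irr[OF nths_lists[OF assms(1)] nths_ne[OF assms(2,3)]] .
  also have "\<dots> = IrrQ (\<lambda>W. free_cum mphi (nths cs W)) (NCs (\<lambda>W. free_cum mphi (nths cs W))) V"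
    using IrrLg_relabel[OF assms(2,3), of "free_cum mphi" "free_cum mphi"] by simp
  finally show ?thesis .
qed

lemma Phi_NC3:
  assumes "bs \<noteq> []"
  shows "Phi_t smul phi t bs = NC3 (\<lambda>V. of_real t * Bp (nths bs V)) (\<lambda>V. of_real (1 + t) * Bp (nths bs V)) {..<length bs}"
  unfolding Phi_sum[OF assms] NC3_def wP_def NCP_NC ..

lemma Phi_P4:
  assumes "cs \<in> lists {f. phi f = 0}" "cs \<noteq> []"
  shows "Phi_t smul phi t cs = (\<Sum>P\<in>NC (length cs). \<Prod>V\<in>P. of_real (1 + t) * free_cum mphi (nths cs V))"
proof -
  define r where "r = (\<lambda>W. free_cum mphi (nths cs W))"
  interpret P: P4ctx r "of_real t" .
  have "Phi_t smul phi t cs = NC3 (\<lambda>V. of_real t * Bp (nths cs V)) (\<lambda>V. of_real (1 + t) * Bp (nths cs V)) {..<length cs}"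
    by (rule Phi_NC3[OF assms(2)])
  also have "\<dots> = NC3 (\<lambda>V. of_real t * IrrQ r (NCs r) V) (\<lambda>V. (1 + of_real t) * IrrQ r (NCs r) V) {..<length cs}"
    by (rule NC3_cong) (simp_all add: b_eq[OF assms(1)] r_def)
  also have "\<dots> = NCs (\<lambda>V. (1 + of_real t) * r V) {..<length cs}"
    by (rule P.P4set) simp
  also have "\<dots> = (\<Sum>P\<in>NC (length cs). \<Prod>V\<in>P. of_real (1 + t) * free_cum mphi (nths cs V))"
    by (simp add: NCs_alt NCP_NC r_def)
  finally show ?thesis .
qed

lemma boolPhi:
  assumes "es \<in> lists {f. phi f = 0}" "es \<noteq> []"
  shows "bool_cum (Phi_t smul phi t) es = IrrLg (\<lambda>l. of_real (1 + t) * Bp l) (\<lambda>l. of_real t * Bp l) es"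
proof (rule bool_cum_local[where A = "{f. phi f = 0}", OF assms])
  fix ds :: "'b list" assume ds: "ds \<in> lists {f. phi f = 0}" "ds \<noteq> []"
  show "Phi_t smul phi t ds = (\<Sum>P\<in>interval_partitions (length ds). \<Prod>V\<in>P.
      IrrLg (\<lambda>l. of_real (1 + t) * Bp l) (\<lambda>l. of_real t * Bp l) (nths ds V))"
    unfolding Phi_NC3[OF ds(2)] by (rule NC3_list)
qed

lemma Psi_bool:
  assumes "cs \<in> lists {f. phi f = 0}" "cs \<noteq> []" "t \<ge> 0"
  shows "Psi_t smul phi t cs = (\<Sum>P\<in>interval_partitions (length cs). \<Prod>V\<in>P.
            of_real (t / (1 + t)) * bool_cum (Phi_t smul phi t) (nths cs V))"
proof -
  have "Psi_t smul phi t cs = NC3 (\<lambda>V. of_real t * Bp (nths cs V)) (\<lambda>V. of_real t * Bp (nths cs V)) {..<length cs}"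
    unfolding Psi_sum[OF assms(2)]
    using NCs_alt[of "{..<length cs}" "\<lambda>V. of_real t * Bp (nths cs V)"] by (simp add: NCs_def NCP_NC)
  also have "\<dots> = (\<Sum>P\<in>interval_partitions (length cs). \<Prod>V\<in>P. IrrLg (\<lambda>l. of_real t * Bp l) (\<lambda>l. of_real t * Bp l) (nths cs V))"
    by (rule NC3_list)
  also have "\<dots> = (\<Sum>P\<in>interval_partitions (length cs). \<Prod>V\<in>P.
            of_real (t / (1 + t)) * bool_cum (Phi_t smul phi t) (nths cs V))"
  proof (intro sum.cong refl prod.cong)
    fix P V assume P: "P \<in> interval_partitions (length cs)" and V: "V \<in> P"
    have p: "partition_on {..<length cs} P" using IP_part[OF P] .
    have 1: "V \<subseteq> {..<length cs}" using partition_onE(1)[OF p] V by blast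
    have 2: "V \<noteq> {}" using partition_onE(3)[OF p V] .
    have ne: "nths cs V \<noteq> []" using nths_ne[OF 1 2] .
    have t1: "(1 + complex_of_real t) \<noteq> 0"
    proof
      assume "1 + complex_of_real t = 0"
      then have "Re (1 + complex_of_real t) = 0" by simp
      then show False using assms(3) by simp
    qed
    have "IrrLg (\<lambda>l. of_real t * Bp l) (\<lambda>l. of_real t * Bp l) (nths cs V) = of_real t * IrrLg Bp (\<lambda>l. of_real t * Bp l) (nths cs V)"
      by (rule IrrLg_scale)
    also have "\<dots> = of_real (t / (1 + t)) * ((1 + of_real t) * IrrLg Bp (\<lambda>l. of_real t * Bp l) (nths cs V))"
      using t1 by (simp add: of_real_divide field_simps)
    also have "(1 + of_real t) * IrrLg Bp (\<lambda>l. of_real t * Bp l) (nths cs V) = IrrLg (\<lambda>l. of_real (1 + t) * Bp l) (\<lambda>l. of_real t * Bp l) (nths cs V)"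
      using IrrLg_scale[of "of_real (1 + t)" Bp] by simp
    also have "\<dots> = bool_cum (Phi_t smul phi t) (nths cs V)"
      using boolPhi[OF nths_lists[OF assms(1)] ne] by simp
    finally show "IrrLg (\<lambda>l. of_real t * Bp l) (\<lambda>l. of_real t * Bp l) (nths cs V) =
        of_real (t / (1 + t)) * bool_cum (Phi_t smul phi t) (nths cs V)" .
  qed
  finally show ?thesis .
qed

end


theorem proposition23:
  fixes smul :: "complex \<Rightarrow> 'b::ring_1 \<Rightarrow> 'b" and star :: "'b \<Rightarrow> 'b"
    and phi :: "'b \<Rightarrow> complex" and t :: real and fs :: "'b list"
  assumes "star_prob_space smul star phi"
    and "t \<ge> 0"
    and "fs \<noteq> []"
    and "\<forall>f\<in>set fs. phi f = 0"
  shows "free_cum (Psi_t smul phi t) fs = of_real t * bool_cum (\<lambda>as. phi (prod_list as)) fs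
       \<and> (\<forall>w\<in>lists {..<length fs}.
            joint_distr (Psi_t smul phi t) fs w
              = bool_pow t (BN_transform t (joint_distr (\<lambda>as. phi (prod_list as)) fs)) w
          \<and> joint_distr (Psi_t smul phi t) fs w
              = bool_pow (t / (1 + t)) (joint_distr (Phi_t smul phi t) fs) w)
       \<and> cfree_cum (Phi_t smul phi t) (Psi_t smul phi t) fs
           = of_real (1 + t) * bool_cum (\<lambda>as. phi (prod_list as)) fs"
proof -
  have mod: "module smul" using assms(1) unfolding star_prob_space_def by blast
  interpret sps smul star phi
    by (rule sps.intro[OF mod], rule sps_axioms.intro, rule assms(1))
  have fsC: "fs \<in> lists {f. phi f = 0}" using assms(4) by auto
  have bfs: "bool_cum mphi fs = Bp fs" by (rule bool_cum_mphi[OF fsC assms(3)])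
  have c1: "free_cum (Psi_t smul phi t) fs = of_real t * bool_cum mphi fs"
    using free_cum_Psi[OF fsC assms(3)] bfs by simp
  have c3: "cfree_cum (Phi_t smul phi t) (Psi_t smul phi t) fs = of_real (1 + t) * bool_cum mphi fs"
    using cfree_Phi[OF fsC assms(3)] bfs by simp
  let ?f = "\<lambda>i. fs ! i"
  have mapC: "map ?f w \<in> lists {f. phi f = 0}" if "w \<in> lists {..<length fs}" for w
    using that assms(4) by (auto simp: in_lists_conv_set)
  have E1: "joint_distr (Psi_t smul phi t) fs w = bool_pow (t / (1 + t)) (joint_distr (Phi_t smul phi t) fs) w"
    if w: "w \<in> lists {..<length fs}" for w
  proof (cases "w = []")
    case True
    then show ?thesis by (simp add: joint_distr_def bool_pow_def Psi_t_def IP_zero)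
  next
    case False
    let ?cs = "map ?f w"
    have "joint_distr (Psi_t smul phi t) fs w = Psi_t smul phi t ?cs" by (simp add: joint_distr_def)
    also have "\<dots> = (\<Sum>P\<in>interval_partitions (length ?cs). \<Prod>V\<in>P. of_real (t / (1 + t)) * bool_cum (Phi_t smul phi t) (nths ?cs V))"
      using Psi_bool[OF mapC[OF w] _ assms(2)] False by simp
    also have "\<dots> = bool_pow (t / (1 + t)) (joint_distr (Phi_t smul phi t) fs) w"
      by (simp add: bool_pow_def bool_cum_jd nths_map)
    finally show ?thesis .
  qed
  have Neq: "bool_cum (free_pow (1 + t) (joint_distr mphi fs)) x = bool_cum (joint_distr (Phi_t smul phi t) fs) x"
    if x: "x \<in> lists {..<length fs}" "x \<noteq> []" for x
  proof (rule bool_cum_local[where A = "{..<length fs}", OF x])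
    fix bs :: "nat list" assume bs: "bs \<in> lists {..<length fs}" "bs \<noteq> []"
    let ?cs = "map ?f bs"
    have "free_pow (1 + t) (joint_distr mphi fs) bs = (\<Sum>P\<in>NC (length bs). \<Prod>V\<in>P. of_real (1 + t) * free_cum mphi (nths ?cs V))"
      by (simp add: free_pow_def free_cum_jd nths_map)
    also have "\<dots> = Phi_t smul phi t ?cs" using Phi_P4[OF mapC[OF bs(1)]] bs(2) by simp
    also have "\<dots> = joint_distr (Phi_t smul phi t) fs bs" by (simp add: joint_distr_def)
    also have "\<dots> = (\<Sum>P\<in>interval_partitions (length bs). \<Prod>V\<in>P. bool_cum (joint_distr (Phi_t smul phi t) fs) (nths bs V))"
      using bool_cum_char[of "joint_distr (Phi_t smul phi t) fs"] bs(2) by blast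
    finally show "free_pow (1 + t) (joint_distr mphi fs) bs =
        (\<Sum>P\<in>interval_partitions (length bs). \<Prod>V\<in>P. bool_cum (joint_distr (Phi_t smul phi t) fs) (nths bs V))" .
  qed
  have E2: "joint_distr (Psi_t smul phi t) fs w = bool_pow t (BN_transform t (joint_distr mphi fs)) w"
    if w: "w \<in> lists {..<length fs}" for w
  proof -
    have "bool_pow t (BN_transform t (joint_distr mphi fs)) w =
        (\<Sum>P\<in>interval_partitions (length w). \<Prod>V\<in>P. of_real t * (of_real (1 / (1 + t)) *
            bool_cum (free_pow (1 + t) (joint_distr mphi fs)) (nths w V)))"
      by (simp add: bool_pow_def[of t] BN_transform_def bool_cum_bool_pow)
    also have "\<dots> = (\<Sum>P\<in>interval_partitions (length w). \<Prod>V\<in>P. of_real (t / (1 + t)) *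
            bool_cum (joint_distr (Phi_t smul phi t) fs) (nths w V))"
    proof (intro sum.cong refl prod.cong)
      fix P V assume P: "P \<in> interval_partitions (length w)" and V: "V \<in> P"
      have p: "partition_on {..<length w} P" using IP_part[OF P] .
      have 1: "V \<subseteq> {..<length w}" using partition_onE(1)[OF p] V by blast
      have 2: "V \<noteq> {}" using partition_onE(3)[OF p V] .
      have "nths w V \<in> lists {..<length fs}" using nths_lists[OF w] .
      moreover have "nths w V \<noteq> []" using nths_ne[OF 1 2] .
      ultimately show "of_real t * (of_real (1 / (1 + t)) * bool_cum (free_pow (1 + t) (joint_distr mphi fs)) (nths w V)) =
          of_real (t / (1 + t)) * bool_cum (joint_distr (Phi_t smul phi t) fs) (nths w V)"
        using Neq by simp
    qed
    also have "\<dots> = bool_pow (t / (1 + t)) (joint_distr (Phi_t smul phi t) fs) w"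
      by (simp add: bool_pow_def)
    finally show ?thesis using E1[OF w] by simp
  qed
  show ?thesis using c1 c3 E1 E2 by blast
qed


end
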